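(* Let $h\in\mathcal H$ and $\varphi(\underline{x})=h(x_0,x_1)$ on $X=[0,1]^{\mathbb N_0}$. If $\mathrm{m}_h$ is totally disconnected, then the Aubry set $(\Omega_\varphi,d_X)$ is homeomorphic to the quotient Aubry set $(\bar\Omega_\varphi,\delta_\varphi)$.
   Context: $X=[0,1]^{\mathbb N_0}$ with metric $d_X(\underline{x},\underline{y})=\sum_{i\ge0}|x_i-y_i|/2^{i+1}$ and shift $\sigma(\underline{x})_i=x_{i+1}$. $\alpha_\varphi=\inf_\mu\int\varphi\,d\mu$ over $\sigma$-invariant Borel probability measures. $B(\underline{x},\underline{y},n;\varepsilon)=\{\underline{z}: d_X(\underline{x},\underline{z})<\varepsilon,\ d_X(\sigma^n\underline{z},\underline{y})<\varepsilon\}$. Mañé potential $S_\varphi(\underline{x},\underline{y})=\lim_{\varepsilon\to0}\inf\{\sum_{i=0}^{n-1}(\varphi(\sigma^i\underline{z})-\alpha_\varphi): n\in\mathbb N,\ \underline{z}\in B(\underline{x},\underline{y},n;\varepsilon)\}$; Peierls barrier $H_\varphi(\underline{x},\underline{y})=\lim_{\varepsilon\to0}\liminf_{n\to\infty}\inf\{\sum_{i=0}^{n-1}(\varphi(\sigma^i\underline{z})-\alpha_\varphi): \underline{z}\in B(\underline{x},\underline{y},n;\varepsilon)\}$; Aubry set $\Omega_\varphi=\{\underline{x}: S_\varphi(\underline{x},\underline{x})=0\}$. On $\Omega_\varphi$, $\delta_\varphi(\underline{x},\underline{y})=H_\varphi(\underline{x},\underline{y})+H_\varphi(\underline{y},\underline{x})$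 is a pseudo-metric; $\bar\Omega_\varphi$ is the quotient of $\Omega_\varphi$ by $\delta_\varphi=0$, with the induced metric (still denoted $\delta_\varphi$). $h^*=\min_x h(x,x)$, $\mathrm{m}_h=\{a: h(a,a)=h^*\}$. A finite sequence $(x_k,\dots,x_l)$ is minimal (for $h$) if $\sum_{i=k}^{l-1}h(x_i,x_{i+1})\le\sum_{i=k}^{l-1}h(y_i,y_{i+1})$ for every $(y_k,\dots,y_l)$ in $[0,1]$ with the same endpoints. $\mathcal H$ is the set of Lipschitz $h:[0,1]^2\to\mathbb R$ such that (H3) if $\xi_1<\xi_2$, $\eta_1<\eta_2$ then $h(\xi_1,\eta_1)+h(\xi_2,\eta_2)<h(\xi_1,\eta_2)+h(\xi_2,\eta_1)$; and (H4) if $(x_{-1},x_0,x_1)\ne(x'_{-1},x_0,x'_1)$ are both minimal then $(x_{-1}-x'_{-1})(x_1-x'_1)<0$. *)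

theory Defs
  imports "HOL-Probability.Probability"
begin

definition Xsp :: "(nat \<Rightarrow> real) set" where
  "Xsp = {x. \<forall>i. x i \<in> {0..1}}"

definition dX :: "(nat \<Rightarrow> real) \<Rightarrow> (nat \<Rightarrow> real) \<Rightarrow> real" where
  "dX x y = (\<Sum>i. \<bar>x i - y i\<bar> / 2 ^ (i + 1))"

definition shift :: "(nat \<Rightarrow> real) \<Rightarrow> (nat \<Rightarrow> real)" where
  "shift x = (\<lambda>i. x (Suc i))"

text \<open>Shift-invariant Borel probability measures on X (Borel sets of X, i.e. the
  trace of the product-topology Borel sigma-algebra, which is the topology of dX).\<close>
definition inv_prob_measures :: "(nat \<Rightarrow> real) measure set" where
  "inv_prob_measures = {M. prob_space M \<and> sets M = sets (restrict_space borel Xsp)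
       \<and> distr M M shift = M}"

definition alpha :: "((nat \<Rightarrow> real) \<Rightarrow> real) \<Rightarrow> real" where
  "alpha \<phi> = (INF M \<in> inv_prob_measures. integral\<^sup>L M \<phi>)"

definition Bset :: "(nat \<Rightarrow> real) \<Rightarrow> (nat \<Rightarrow> real) \<Rightarrow> nat \<Rightarrow> real \<Rightarrow> (nat \<Rightarrow> real) set" where
  "Bset x y n \<epsilon> = {z \<in> Xsp. dX x z < \<epsilon> \<and> dX ((shift ^^ n) z) y < \<epsilon>}"

definition birkhoff :: "((nat \<Rightarrow> real) \<Rightarrow> real) \<Rightarrow> nat \<Rightarrow> (nat \<Rightarrow> real) \<Rightarrow> real" where
  "birkhoff \<phi> n z = (\<Sum>i<n. \<phi> ((shift ^^ i) z) - alpha \<phi>)"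

definition mane :: "((nat \<Rightarrow> real) \<Rightarrow> real) \<Rightarrow> (nat \<Rightarrow> real) \<Rightarrow> (nat \<Rightarrow> real) \<Rightarrow> ereal" where
  "mane \<phi> x y = Lim (at_right 0)
     (\<lambda>\<epsilon>::real. INF p \<in> {(n, z). n \<ge> 1 \<and> z \<in> Bset x y n \<epsilon>}. ereal (birkhoff \<phi> (fst p) (snd p)))"

definition peierls :: "((nat \<Rightarrow> real) \<Rightarrow> real) \<Rightarrow> (nat \<Rightarrow> real) \<Rightarrow> (nat \<Rightarrow> real) \<Rightarrow> ereal" where
  "peierls \<phi> x y = Lim (at_right 0)
     (\<lambda>\<epsilon>::real. liminf (\<lambda>n. INF z \<in> Bset x y n \<epsilon>. ereal (birkhoff \<phi> n z)))"

definition aubry :: "((nat \<Rightarrow> real) \<Rightarrow> real) \<Rightarrow> (nat \<Rightarrow> real) set" where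
  "aubry \<phi> = {x \<in> Xsp. mane \<phi> x x = 0}"

definition delta :: "((nat \<Rightarrow> real) \<Rightarrow> real) \<Rightarrow> (nat \<Rightarrow> real) \<Rightarrow> (nat \<Rightarrow> real) \<Rightarrow> ereal" where
  "delta \<phi> x y = peierls \<phi> x y + peierls \<phi> y x"

definition qclass :: "((nat \<Rightarrow> real) \<Rightarrow> real) \<Rightarrow> (nat \<Rightarrow> real) \<Rightarrow> (nat \<Rightarrow> real) set" where
  "qclass \<phi> x = {y \<in> aubry \<phi>. delta \<phi> x y = 0}"

definition quot_aubry :: "((nat \<Rightarrow> real) \<Rightarrow> real) \<Rightarrow> (nat \<Rightarrow> real) set set" where
  "quot_aubry \<phi> = qclass \<phi> ` aubry \<phi>"

definition qdelta :: "((nat \<Rightarrow> real) \<Rightarrow> real) \<Rightarrow> (nat \<Rightarrow> real) set \<Rightarrow> (nat \<Rightarrow> real) set \<Rightarrow> ereal" where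
  "qdelta \<phi> A B = delta \<phi> (SOME a. a \<in> A) (SOME b. b \<in> B)"

definition homeomorphic_aubry :: "((nat \<Rightarrow> real) \<Rightarrow> real) \<Rightarrow> bool" where
  "homeomorphic_aubry \<phi> \<longleftrightarrow> (\<exists>f g.
     (\<forall>x \<in> aubry \<phi>. f x \<in> quot_aubry \<phi> \<and> g (f x) = x) \<and>
     (\<forall>A \<in> quot_aubry \<phi>. g A \<in> aubry \<phi> \<and> f (g A) = A) \<and>
     (\<forall>x \<in> aubry \<phi>. \<forall>\<epsilon>>0. \<exists>\<eta>>0. \<forall>y \<in> aubry \<phi>.
         dX x y < \<eta> \<longrightarrow> qdelta \<phi> (f x) (f y) < ereal \<epsilon>) \<and>
     (\<forall>A \<in> quot_aubry \<phi>. \<forall>\<epsilon>>0. \<exists>\<eta>>0. \<forall>B \<in> quot_aubry \<phi>.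
         qdelta \<phi> A B < ereal \<eta> \<longrightarrow> dX (g A) (g B) < \<epsilon>))"

definition cost :: "(real \<Rightarrow> real \<Rightarrow> real) \<Rightarrow> real list \<Rightarrow> real" where
  "cost h xs = (\<Sum>i < length xs - 1. h (xs ! i) (xs ! Suc i))"

definition minimal_seq :: "(real \<Rightarrow> real \<Rightarrow> real) \<Rightarrow> real list \<Rightarrow> bool" where
  "minimal_seq h xs \<longleftrightarrow> xs \<noteq> [] \<and> set xs \<subseteq> {0..1} \<and>
     (\<forall>ys. length ys = length xs \<and> set ys \<subseteq> {0..1} \<and> hd ys = hd xs \<and> last ys = last xs
        \<longrightarrow> cost h xs \<le> cost h ys)"

definition classH :: "(real \<Rightarrow> real \<Rightarrow> real) set" where
  "classH = {h.
     (\<exists>C. C-lipschitz_on ({0..1} \<times> {0..1}) (\<lambda>(a, b). h a b)) \<and>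
     (\<forall>\<xi>1 \<xi>2 \<eta>1 \<eta>2. \<xi>1 \<in> {0..1} \<and> \<xi>2 \<in> {0..1} \<and> \<eta>1 \<in> {0..1} \<and> \<eta>2 \<in> {0..1} \<and>
        \<xi>1 < \<xi>2 \<and> \<eta>1 < \<eta>2 \<longrightarrow> h \<xi>1 \<eta>1 + h \<xi>2 \<eta>2 < h \<xi>1 \<eta>2 + h \<xi>2 \<eta>1) \<and>
     (\<forall>a b c a' c'. minimal_seq h [a, b, c] \<and> minimal_seq h [a', b, c'] \<and>
        (a, b, c) \<noteq> (a', b, c') \<longrightarrow> (a - a') * (c - c') < 0)}"

definition hstar :: "(real \<Rightarrow> real \<Rightarrow> real) \<Rightarrow> real" where
  "hstar h = (INF x \<in> {0..1}. h x x)"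

definition mset_h :: "(real \<Rightarrow> real \<Rightarrow> real) \<Rightarrow> real set" where
  "mset_h h = {a \<in> {0..1}. h a a = hstar h}"

definition totally_disconnected :: "real set \<Rightarrow> bool" where
  "totally_disconnected S \<longleftrightarrow> (\<forall>T \<subseteq> S. connected T \<longrightarrow> (\<exists>a. T \<subseteq> {a}))"

end

theory Submission imports Defs begin

locale twist =
  fixes h :: "real \<Rightarrow> real \<Rightarrow> real"
  assumes hH: "h \<in> classH"
begin

definition L :: real where
  "L = (SOME C. C-lipschitz_on ({0..1} \<times> {0..1}) (\<lambda>(a, b). h a b)) + 1"

lemma lip0: "(L - 1)-lipschitz_on ({0..1} \<times> {0..1}) (\<lambda>(a, b). h a b)"
proof -
  obtain C where "C-lipschitz_on ({0..1} \<times> {0..1}) (\<lambda>(a, b). h a b)"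
    using hH unfolding classH_def by blast
  then show ?thesis unfolding L_def by simp (rule someI)
qed

lemma L_pos: "L > 0"
  using lip0 unfolding lipschitz_on_def by simp

lemma h_lip:
  assumes "a \<in> {0..1}" "b \<in> {0..1}" "a' \<in> {0..1}" "b' \<in> {0..1}"
  shows "\<bar>h a b - h a' b'\<bar> \<le> L * (\<bar>a - a'\<bar> + \<bar>b - b'\<bar>)"
proof -
  have "dist (h a b) (h a' b') \<le> (L - 1) * dist (a, b) (a', b')"
    using lip0 assms unfolding lipschitz_on_def by fastforce
  also have "dist (a, b) (a', b') \<le> \<bar>a - a'\<bar> + \<bar>b - b'\<bar>"
    unfolding dist_Pair_Pair dist_real_def using sqrt_sum_squares_le_sum_abs by simp
  then have "(L - 1) * dist (a, b) (a', b') \<le> L * (\<bar>a - a'\<bar> + \<bar>b - b'\<bar>)"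
  proof -
    have "0 \<le> L - 1" using lip0 unfolding lipschitz_on_def by simp
    then have "(L - 1) * dist (a, b) (a', b') \<le> (L - 1) * (\<bar>a - a'\<bar> + \<bar>b - b'\<bar>)"
      by (rule mult_left_mono[OF \<open>dist (a, b) (a', b') \<le> _\<close>])
    then show ?thesis by (simp add: algebra_simps)
  qed
  finally show ?thesis by (simp add: dist_real_def)
qed

lemma h_H3:
  assumes "\<xi>1 \<in> {0..1}" "\<xi>2 \<in> {0..1}" "\<eta>1 \<in> {0..1}" "\<eta>2 \<in> {0..1}" "\<xi>1 < \<xi>2" "\<eta>1 < \<eta>2"
  shows "h \<xi>1 \<eta>1 + h \<xi>2 \<eta>2 < h \<xi>1 \<eta>2 + h \<xi>2 \<eta>1"
  using hH assms unfolding classH_def by blast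

lemma h_cont: "continuous_on ({0..1} \<times> {0..1}) (\<lambda>(a, b). h a b)"
  using lip0 by (rule lipschitz_on_continuous_on)

lemma hdiag_cont: "continuous_on {0..1} (\<lambda>a. h a a)"
proof -
  have "continuous_on {0..1} ((\<lambda>(a, b). h a b) \<circ> (\<lambda>a. (a, a)))"
    by (rule continuous_on_compose[OF _ continuous_on_subset[OF h_cont]]) (auto intro!: continuous_intros)
  then show ?thesis by (simp add: o_def)
qed

lemma hstar_attained: "\<exists>a\<in>{0..1}. h a a = hstar h \<and> (\<forall>b\<in>{0..1}. h a a \<le> h b b)"
proof -
  obtain a where a: "a \<in> {0..1}" "\<forall>b\<in>{0..1}. h a a \<le> h b b"
    using continuous_attains_inf[OF compact_Icc _ hdiag_cont] by auto
  have "hstar h = h a a" unfolding hstar_def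
    by (rule cInf_eq_minimum) (use a in auto)
  with a show ?thesis by auto
qed

lemma hstar_le: "a \<in> {0..1} \<Longrightarrow> hstar h \<le> h a a"
  using hstar_attained by force


lemma h_G:
  assumes "q \<in> {0..1}" "p \<in> {0..1}" "r \<in> {0..1}" "q \<le> p" "r \<le> p"
  shows "h q r + h p p \<le> h q p + h p r"
proof (cases "q < p \<and> r < p")
  case True
  then show ?thesis using h_H3[of q p r p] assms by simp
next
  case False
  then have "q = p \<or> r = p" using assms by auto
  then show ?thesis by auto
qed

lemma h_G_strict:
  assumes "q \<in> {0..1}" "p \<in> {0..1}" "r \<in> {0..1}" "q < p" "r < p"
  shows "h q r + h p p < h q p + h p r"
  using h_H3[of q p r p] assms by simp

fun ocost :: "real list \<Rightarrow> real" where
  "ocost (a # b # t) = h a b + ocost (b # t)"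
| "ocost _ = 0"

definition ccost :: "real list \<Rightarrow> real" where
  "ccost ws = ocost (ws @ [hd ws])"

lemma ocost_append: "ocost (xs @ y # ys) = ocost (xs @ [y]) + ocost (y # ys)"
proof (induction xs)
  case Nil
  then show ?case by simp
next
  case (Cons a xs)
  then show ?case by (cases xs) auto
qed

lemma ocost_snoc: "us \<noteq> [] \<Longrightarrow> ocost (us @ [p]) = ocost us + h (last us) p"
proof (induction us)
  case Nil
  then show ?case by simp
next
  case (Cons a us)
  then show ?case by (cases us) auto
qed

lemma ccost_rotate:
  assumes "xs \<noteq> []" "ys \<noteq> []"
  shows "ccost (xs @ ys) = ccost (ys @ xs)"
proof -
  have "ccost (xs @ ys) = ocost (xs @ hd ys # (tl ys @ [hd xs]))"
    using assms by (cases xs; cases ys) (simp_all add: ccost_def)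
  also have "\<dots> = ocost (xs @ [hd ys]) + ocost (ys @ [hd xs])"
    using assms by (subst ocost_append) (cases ys; simp)
  finally have 1: "ccost (xs @ ys) = ocost (xs @ [hd ys]) + ocost (ys @ [hd xs])" .
  have "ccost (ys @ xs) = ocost (ys @ hd xs # (tl xs @ [hd ys]))"
    using assms by (cases xs; cases ys) (simp_all add: ccost_def)
  also have "\<dots> = ocost (ys @ [hd xs]) + ocost (xs @ [hd ys])"
    using assms by (subst ocost_append) (cases xs; simp)
  finally show ?thesis using 1 by simp
qed

lemma ccost_snoc:
  assumes "us \<noteq> []"
  shows "ccost (us @ [p]) = ccost us - h (last us) (hd us) + h (last us) p + h p (hd us)"
proof -
  have "ccost (us @ [p]) = ocost (us @ p # [hd us])" using assms by (simp add: ccost_def)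
  also have "\<dots> = ocost (us @ [p]) + h p (hd us)" by (subst ocost_append) simp
  also have "\<dots> = ocost us + h (last us) p + h p (hd us)" using assms by (simp add: ocost_snoc)
  finally show ?thesis using assms by (simp add: ccost_def ocost_snoc)
qed

lemma ccost_single: "ccost [a] = h a a"
  by (simp add: ccost_def)

lemma rotate_max:
  assumes "p \<in> set ws" "length ws \<ge> 2"
  shows "\<exists>us. us \<noteq> [] \<and> ccost ws = ccost (us @ [p]) \<and> set ws = set (us @ [p])
     \<and> sum_list (map (f::real\<Rightarrow>real) ws) = sum_list (map f (us @ [p])) \<and> length ws = Suc (length us)"
proof -
  obtain xs ys where ws: "ws = (xs @ [p]) @ ys" using split_list[OF assms(1)] by auto
  show ?thesis
  proof (cases "ys = []")
    case True
    then show ?thesis using ws assms by (intro exI[of _ xs]) auto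
  next
    case False
    have "ccost ws = ccost (ys @ (xs @ [p]))" unfolding ws by (rule ccost_rotate) (use False in auto)
    then show ?thesis using ws False by (intro exI[of _ "ys @ xs"]) (auto simp: ac_simps)
  qed
qed

lemma cycle_basic:
  "ws \<noteq> [] \<Longrightarrow> set ws \<subseteq> {0..1} \<Longrightarrow> sum_list (map (\<lambda>w. h w w) ws) \<le> ccost ws"
proof (induction "length ws" arbitrary: ws rule: less_induct)
  case less
  show ?case
  proof (cases "length ws = 1")
    case True
    then obtain a where "ws = [a]" by (metis One_nat_def length_0_conv length_Suc_conv)
    then show ?thesis by (simp add: ccost_single)
  next
    case False
    have "length ws \<noteq> 0" using less(2) by simp
    then have len: "length ws \<ge> 2" using False by linarith
    define p where "p = Max (set ws)"
    have p: "p \<in> set ws" "\<forall>w\<in>set ws. w \<le> p" using less(2) unfolding p_def by auto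
    obtain us where us: "us \<noteq> []" "ccost ws = ccost (us @ [p])" "set ws = set (us @ [p])"
      "sum_list (map (\<lambda>w. h w w) ws) = sum_list (map (\<lambda>w. h w w) (us @ [p]))"
      "length ws = Suc (length us)"
      using rotate_max[OF p(1) len] by blast
    have sub: "set us \<subseteq> {0..1}" using us(3) less(3) by auto
    have IH: "sum_list (map (\<lambda>w. h w w) us) \<le> ccost us"
      using less(1)[of us] us sub by simp
    have q: "last us \<in> set us" "hd us \<in> set us" using us(1) by auto
    have G: "h (last us) (hd us) + h p p \<le> h (last us) p + h p (hd us)"
      by (rule h_G) (use q sub p us(3) less(3) in auto)
    show ?thesis using us(2,4) IH G ccost_snoc[OF us(1), of p] by simp
  qed
qed


lemma sum_diag_ge: "set ws \<subseteq> {0..1} \<Longrightarrow> real (length ws) * hstar h \<le> sum_list (map (\<lambda>w. h w w) ws)"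
proof (induction ws)
  case Nil
  then show ?case by simp
next
  case (Cons a ws)
  then show ?case using hstar_le[of a] by (simp add: algebra_simps)
qed

lemma cycle_ge: "ws \<noteq> [] \<Longrightarrow> set ws \<subseteq> {0..1} \<Longrightarrow> real (length ws) * hstar h \<le> ccost ws"
  using sum_diag_ge cycle_basic by (meson order_trans)

definition F :: "real \<Rightarrow> real \<Rightarrow> real \<Rightarrow> real" where
  "F q p r = (h p p - hstar h) + (h q q - hstar h) + (h q p + h p r - h q r - h p p)"

lemma cycle_refined:
  assumes c: "c \<in> {0..1}"
    and eta: "\<And>q p r. q \<in> {0..c} \<Longrightarrow> p \<in> {c..1} \<Longrightarrow> r \<in> {0..c} \<Longrightarrow> \<eta> \<le> F q p r"
    and eta2: "\<eta> \<le> h c c - hstar h"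
  shows "ws \<noteq> [] \<Longrightarrow> set ws \<subseteq> {0..1} \<Longrightarrow> \<exists>w\<in>set ws. w \<le> c \<Longrightarrow> \<exists>w\<in>set ws. c \<le> w
    \<Longrightarrow> real (length ws) * hstar h + \<eta> \<le> ccost ws"
proof (induction "length ws" arbitrary: ws rule: less_induct)
  case less
  show ?case
  proof (cases "length ws = 1")
    case True
    then obtain a where "ws = [a]" by (metis One_nat_def length_0_conv length_Suc_conv)
    then show ?thesis using less eta2 by (simp add: ccost_single)
  next
    case False
    have "length ws \<noteq> 0" using less(2) by simp
    then have len: "length ws \<ge> 2" using False by linarith
    define p where "p = Max (set ws)"
    have p: "p \<in> set ws" "\<forall>w\<in>set ws. w \<le> p" using less(2) unfolding p_def by auto
    obtain us where us: "us \<noteq> []" "ccost ws = ccost (us @ [p])" "set ws = set (us @ [p])"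
      "length ws = Suc (length us)"
      using rotate_max[OF p(1) len] by blast
    have sub: "set us \<subseteq> {0..1}" using us(3) less(3) by auto
    have q: "last us \<in> set us" "hd us \<in> set us" using us(1) by auto
    have p01: "p \<in> {0..1}" using p less(3) by auto
    have pc: "c \<le> p" using less(5) p by auto
    have eq: "ccost ws = ccost us - h (last us) (hd us) + h (last us) p + h p (hd us)"
      using us(2) ccost_snoc[OF us(1), of p] by simp
    show ?thesis
    proof (cases "(\<exists>w\<in>set us. w \<le> c) \<and> (\<exists>w\<in>set us. c \<le> w)")
      case True
      have IH: "real (length us) * hstar h + \<eta> \<le> ccost us"
        using less(1)[of us] us True sub by simp
      have G: "h (last us) (hd us) + h p p \<le> h (last us) p + h p (hd us)"
        by (rule h_G) (use q sub p us(3) less(3) in auto)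
      show ?thesis using IH G eq hstar_le[OF p01] us(4) by (simp add: algebra_simps)
    next
      case False
      have allc: "\<forall>u\<in>set us. u < c"
      proof (rule ccontr)
        assume "\<not> (\<forall>u\<in>set us. u < c)"
        then obtain u where u: "u \<in> set us" "c \<le> u" by auto
        then have "\<not> (\<exists>w\<in>set us. w \<le> c)" using False by auto
        then have "p \<le> c" using less(4) us(3) by auto
        then have "u \<le> c" using p u us(3) by auto
        then show False using u \<open>\<not> (\<exists>w\<in>set us. w \<le> c)\<close> by auto
      qed
      have ql: "last us \<in> {0..c}" "hd us \<in> {0..c}" using allc q sub by auto
      have Fb: "\<eta> \<le> F (last us) p (hd us)" by (rule eta) (use ql p01 pc in auto)
      have bl: "us = butlast us @ [last us]" using us(1) by simp
      have "sum_list (map (\<lambda>w. h w w) us) = sum_list (map (\<lambda>w. h w w) (butlast us)) + h (last us) (last us)"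
        by (subst bl) simp
      moreover have "real (length (butlast us)) * hstar h \<le> sum_list (map (\<lambda>w. h w w) (butlast us))"
        by (rule sum_diag_ge) (use sub in \<open>auto dest: in_set_butlastD\<close>)
      moreover have "sum_list (map (\<lambda>w. h w w) us) \<le> ccost us" by (rule cycle_basic) (use us(1) sub in auto)
      ultimately have "real (length us - 1) * hstar h + h (last us) (last us) \<le> ccost us" by simp
      then show ?thesis using Fb eq us(4) us(1) unfolding F_def
        by (cases "length us") (auto simp: algebra_simps)
    qed
  qed
qed


lemma h_comp_cont:
  assumes "continuous_on S f" "continuous_on S g" "\<And>t. t \<in> S \<Longrightarrow> f t \<in> {0..1} \<and> g t \<in> {0..1}"
  shows "continuous_on S (\<lambda>t. h (f t) (g t))"
proof -
  have "continuous_on S (\<lambda>t. (\<lambda>(a, b). h a b) (f t, g t))"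
    by (rule continuous_on_compose2[OF h_cont]) (use assms in \<open>auto intro!: continuous_intros\<close>)
  then show ?thesis by simp
qed

lemma eta_exists:
  assumes c: "c \<in> {0..1}" "c \<notin> mset_h h"
  shows "\<exists>\<eta>>0. (\<forall>q p r. q \<in> {0..c} \<longrightarrow> p \<in> {c..1} \<longrightarrow> r \<in> {0..c} \<longrightarrow> \<eta> \<le> F q p r)
     \<and> \<eta> \<le> h c c - hstar h"
proof -
  have kc: "hstar h < h c c" using c hstar_le[of c] unfolding mset_h_def by force
  define K where "K = {0..c} \<times> {c..1} \<times> {0..c}"
  have cK: "compact K" unfolding K_def by (intro compact_Times compact_Icc)
  have neK: "K \<noteq> {}" using c unfolding K_def by auto
  define F' where "F' t = F (fst t) (fst (snd t)) (snd (snd t))" for t :: "real \<times> real \<times> real"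
  have K01: "\<And>t. t \<in> K \<Longrightarrow> fst t \<in> {0..1} \<and> fst (snd t) \<in> {0..1} \<and> snd (snd t) \<in> {0..1}"
    using c unfolding K_def by auto
  have "continuous_on K F'"
    unfolding F'_def F_def
    by (intro continuous_intros h_comp_cont) (auto dest: K01)
  then obtain t0 where t0: "t0 \<in> K" "\<forall>t\<in>K. F' t0 \<le> F' t"
    using continuous_attains_inf[OF cK neK] by blast
  obtain q p r where qpr: "t0 = (q, p, r)" by (cases t0) auto
  have q: "q \<in> {0..c}" and p: "p \<in> {c..1}" and r: "r \<in> {0..c}" using t0(1) qpr K_def by auto
  have q1: "q \<in> {0..1}" "p \<in> {0..1}" "r \<in> {0..1}" using q p r c by auto
  have A: "0 \<le> h p p - hstar h" "0 \<le> h q q - hstar h" using hstar_le q1 by auto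
  have G: "0 \<le> h q p + h p r - h q r - h p p" using h_G[of q p r] q1 q p r by auto
  have pos: "0 < F q p r"
  proof (cases "q = c \<or> p = c")
    case True
    then show ?thesis using A G kc unfolding F_def by auto
  next
    case False
    then have "q < p" "r < p" using q p r by auto
    then have "0 < h q p + h p r - h q r - h p p" using h_G_strict[of q p r] q1 by auto
    then show ?thesis using A unfolding F_def by auto
  qed
  show ?thesis
  proof (intro exI[of _ "min (F q p r) (h c c - hstar h)"] conjI allI impI)
    show "0 < min (F q p r) (h c c - hstar h)" using pos kc by auto
    fix q' p' r' assume "q' \<in> {0..c}" "p' \<in> {c..1}" "r' \<in> {0..c}"
    then have "(q', p', r') \<in> K" unfolding K_def by auto
    then have "F q p r \<le> F q' p' r'" using t0(2) qpr unfolding F'_def by force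
    then show "min (F q p r) (h c c - hstar h) \<le> F q' p' r'" by simp
  qed simp
qed

lemma cycle_eta:
  assumes c: "c \<in> {0..1}" "c \<notin> mset_h h"
  shows "\<exists>\<eta>>0. \<forall>ws. ws \<noteq> [] \<longrightarrow> set ws \<subseteq> {0..1} \<longrightarrow> (\<exists>w\<in>set ws. w \<le> c) \<longrightarrow> (\<exists>w\<in>set ws. c \<le> w)
    \<longrightarrow> real (length ws) * hstar h + \<eta> \<le> ccost ws"
proof -
  obtain \<eta> where "\<eta> > 0" "\<forall>q p r. q \<in> {0..c} \<longrightarrow> p \<in> {c..1} \<longrightarrow> r \<in> {0..c} \<longrightarrow> \<eta> \<le> F q p r"
    "\<eta> \<le> h c c - hstar h"
    using eta_exists[OF c] by blast
  then show ?thesis using cycle_refined[OF c(1), of \<eta>] by blast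
qed

end


section \<open>Metric facts\<close>

lemma geo_eq: "(\<lambda>i::nat. C / 2 ^ (i + 1) :: real) = (\<lambda>i. C * ((1/2) ^ i / 2))"
  by (auto simp: power_divide field_simps)

lemma geo_summable: "summable (\<lambda>i::nat. C / 2 ^ (i + 1) :: real)"
  unfolding geo_eq by (intro summable_mult summable_divide summable_geometric) simp

lemma geo_sum: "(\<Sum>i. C / 2 ^ (i + 1) :: real) = C"
proof -
  have "(\<Sum>i. (1/2::real) ^ i) = 2" using suminf_geometric[of "1/2::real"] by simp
  then have "(\<Sum>i. (1/2::real) ^ i / 2) = 1"
    using suminf_divide[OF summable_geometric[of "1/2::real"], of 2] by simp
  then show ?thesis unfolding geo_eq
    using suminf_mult[of "\<lambda>i. (1/2::real) ^ i / 2" C] summable_divide[OF summable_geometric[of "1/2::real"], of 2]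
    by simp
qed

lemma dX_summable:
  assumes "x \<in> Xsp" "y \<in> Xsp"
  shows "summable (\<lambda>i. \<bar>x i - y i\<bar> / 2 ^ (i + 1))"
proof (rule summable_comparison_test'[OF geo_summable[of 1]])
  fix i :: nat
  have "x i \<in> {0..1}" "y i \<in> {0..1}" using assms unfolding Xsp_def by auto
  then have "\<bar>x i - y i\<bar> \<le> 1" by (auto simp: abs_le_iff)
  then show "norm (\<bar>x i - y i\<bar> / 2 ^ (i + 1)) \<le> 1 / 2 ^ (i + 1)"
    by (simp add: divide_right_mono)
qed

lemma dX_nonneg: "x \<in> Xsp \<Longrightarrow> y \<in> Xsp \<Longrightarrow> 0 \<le> dX x y"
  unfolding dX_def by (rule suminf_nonneg[OF dX_summable]) auto

lemma dX_sym: "dX x y = dX y x"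
  unfolding dX_def by (simp add: abs_minus_commute)

lemma dX_coord:
  assumes "x \<in> Xsp" "y \<in> Xsp"
  shows "\<bar>x k - y k\<bar> \<le> 2 ^ (k + 1) * dX x y"
proof -
  have "(\<Sum>i\<in>{k}. \<bar>x i - y i\<bar> / 2 ^ (i + 1)) \<le> dX x y"
    unfolding dX_def by (rule sum_le_suminf[OF dX_summable[OF assms]]) auto
  then show ?thesis by (simp add: field_simps)
qed

lemma dX_const: "dX (\<lambda>_. a) (\<lambda>_. b) = \<bar>a - b\<bar>"
  unfolding dX_def using geo_sum by simp

lemma dX_switch:
  "dX (\<lambda>_. a) (\<lambda>i. if i < n then a else b) = \<bar>a - b\<bar> / 2 ^ n"
proof -
  let ?f = "\<lambda>i. \<bar>a - (if i < n then a else b)\<bar> / 2 ^ (i + 1)"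
  have sm: "summable ?f"
    by (rule summable_comparison_test'[OF geo_summable[of "\<bar>a - b\<bar>"]]) (auto simp: divide_right_mono)
  have "dX (\<lambda>_. a) (\<lambda>i. if i < n then a else b) = (\<Sum>i. ?f (i + n)) + (\<Sum>i<n. ?f i)"
    unfolding dX_def by (rule suminf_split_initial_segment[OF sm])
  also have "(\<Sum>i<n. ?f i) = 0" by simp
  also have "(\<lambda>i. ?f (i + n)) = (\<lambda>i. (\<bar>a - b\<bar> / 2 ^ n) / 2 ^ (i + 1))"
    by (auto simp: power_add field_simps)
  also have "(\<Sum>i. (\<bar>a - b\<bar> / 2 ^ n) / 2 ^ (i + 1)) = \<bar>a - b\<bar> / 2 ^ n" by (rule geo_sum)
  finally show ?thesis by simp
qed

lemma shift_pow: "(shift ^^ n) z = (\<lambda>k. z (k + n))"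
  by (induction n arbitrary: z) (auto simp: shift_def funpow_swap1)

lemma Xsp_shift: "z \<in> Xsp \<Longrightarrow> (shift ^^ n) z \<in> Xsp"
  unfolding Xsp_def shift_pow by auto

lemma Xsp_const: "a \<in> {0..1} \<Longrightarrow> (\<lambda>_. a) \<in> Xsp"
  unfolding Xsp_def by auto

lemma Xsp_coord: "z \<in> Xsp \<Longrightarrow> z i \<in> {0..1}"
  unfolding Xsp_def by auto

context twist
begin

lemma ocost_map: "ocost (map z [0..<Suc n]) = (\<Sum>i<n. h (z i) (z (Suc i)))"
proof (induction n)
  case 0
  then show ?case by simp
next
  case (Suc n)
  have "ocost (map z [0..<Suc (Suc n)]) = ocost (map z [0..<Suc n] @ [z (Suc n)])" by simp
  also have "\<dots> = ocost (map z [0..<Suc n]) + h (z n) (z (Suc n))"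
    by (subst ocost_snoc) (auto simp: last_map)
  finally show ?case using Suc by simp
qed

lemma chain_ccost:
  assumes "n \<ge> 1"
  shows "(\<Sum>i<n. h (z i) (z (Suc i))) = ccost (map z [0..<n]) - h (z (n - 1)) (z 0) + h (z (n - 1)) (z n)"
proof -
  obtain m where n: "n = Suc m" using assms by (cases n) auto
  have hd: "hd (map z [0..<n]) = z 0" by (simp add: n upt_conv_Cons del: upt_Suc)
  have "ccost (map z [0..<n]) = ocost (map z [0..<n] @ [z 0])" unfolding ccost_def hd ..
  also have "\<dots> = ocost (map z [0..<n]) + h (z m) (z 0)" by (subst ocost_snoc) (auto simp: n last_map)
  also have "ocost (map z [0..<n]) = (\<Sum>i<m. h (z i) (z (Suc i)))" unfolding n by (rule ocost_map)
  finally show ?thesis unfolding n by simp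
qed

lemma chain_bound:
  assumes "n \<ge> 1" "\<And>i. i \<le> n \<Longrightarrow> z i \<in> {0..1}"
  shows "- L * \<bar>z n - z 0\<bar> \<le> (\<Sum>i<n. h (z i) (z (Suc i)) - hstar h)"
proof -
  have set: "set (map z [0..<n]) \<subseteq> {0..1}" using assms(2) by auto
  have "real (length (map z [0..<n])) * hstar h \<le> ccost (map z [0..<n])"
    by (rule cycle_ge) (use assms set in auto)
  moreover have "h (z (n - 1)) (z 0) - h (z (n - 1)) (z n) \<le> L * \<bar>z n - z 0\<bar>"
    using h_lip[of "z (n - 1)" "z n" "z (n - 1)" "z 0"] assms by (auto simp: abs_le_iff)
  ultimately show ?thesis using chain_ccost[OF assms(1), of z] by (simp add: sum_subtractf)
qed

lemma chain_bound_eta: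
  assumes c: "c \<in> {0..1}" "c \<notin> mset_h h"
  shows "\<exists>\<eta>>0. \<forall>(n::nat) (z::nat \<Rightarrow> real) j k. n \<ge> 1 \<longrightarrow> (\<forall>i\<le>n. z i \<in> {0..1}) \<longrightarrow> j < n \<longrightarrow> k < n
     \<longrightarrow> z j \<le> c \<longrightarrow> c \<le> z k \<longrightarrow> \<eta> - L * \<bar>z n - z 0\<bar> \<le> (\<Sum>i<n. h (z i) (z (Suc i)) - hstar h)"
proof -
  obtain \<eta> where eta: "\<eta> > 0" "\<forall>ws. ws \<noteq> [] \<longrightarrow> set ws \<subseteq> {0..1} \<longrightarrow> (\<exists>w\<in>set ws. w \<le> c) \<longrightarrow> (\<exists>w\<in>set ws. c \<le> w)
    \<longrightarrow> real (length ws) * hstar h + \<eta> \<le> ccost ws"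
    using cycle_eta[OF c] by blast
  show ?thesis
  proof (intro exI[of _ \<eta>] conjI allI impI)
    fix n :: nat and z :: "nat \<Rightarrow> real" and j k
    assume a: "n \<ge> 1" "\<forall>i\<le>n. z i \<in> {0..1}" "j < n" "k < n" "z j \<le> c" "c \<le> z k"
    have set: "set (map z [0..<n]) \<subseteq> {0..1}" using a(2) by auto
    have e1: "\<exists>w\<in>set (map z [0..<n]). w \<le> c" using a(3,5) by force
    have e2: "\<exists>w\<in>set (map z [0..<n]). c \<le> w" using a(4,6) by force
    have ne: "map z [0..<n] \<noteq> []" using a(1) by simp
    have "real (length (map z [0..<n])) * hstar h + \<eta> \<le> ccost (map z [0..<n])"
      using eta(2) set e1 e2 ne by blast
    moreover have "h (z (n - 1)) (z 0) - h (z (n - 1)) (z n) \<le> L * \<bar>z n - z 0\<bar>"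
      using h_lip[of "z (n - 1)" "z n" "z (n - 1)" "z 0"] a by (auto simp: abs_le_iff)
    ultimately show "\<eta> - L * \<bar>z n - z 0\<bar> \<le> (\<Sum>i<n. h (z i) (z (Suc i)) - hstar h)"
      using chain_ccost[OF a(1), of z] by (simp add: sum_subtractf)
  qed (rule eta(1))
qed



section \<open>The ergodic minimum\<close>

lemma space_N: "space (restrict_space borel Xsp) = Xsp"
  by (simp add: space_restrict_space)

lemma shift_cont: "continuous_on UNIV (shift :: (nat \<Rightarrow> real) \<Rightarrow> _)"
  unfolding shift_def by (intro continuous_on_coordinatewise_then_product continuous_on_product_coordinates)

lemma shift_meas: "shift \<in> measurable (restrict_space borel Xsp) (restrict_space borel Xsp)"
proof (rule measurable_restrict_space2)
  show "shift \<in> space (restrict_space borel Xsp) \<rightarrow> Xsp"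
    using Xsp_shift[of _ 1] by (auto simp: space_N)
  show "shift \<in> measurable (restrict_space borel Xsp) borel"
    by (rule measurable_restrict_space1) (rule borel_measurable_continuous_onI[OF shift_cont])
qed

lemma h_bound: "a \<in> {0..1} \<Longrightarrow> b \<in> {0..1} \<Longrightarrow> \<bar>h a b\<bar> \<le> \<bar>h 0 0\<bar> + 2 * L"
proof -
  assume a: "a \<in> {0..1}" "b \<in> {0..1}"
  have "\<bar>h a b - h 0 0\<bar> \<le> L * (\<bar>a - 0\<bar> + \<bar>b - 0\<bar>)" using h_lip[of a b 0 0] a by auto
  moreover have "L * (\<bar>a - 0\<bar> + \<bar>b - 0\<bar>) \<le> L * 2" by (rule mult_left_mono) (use a L_pos in auto)
  ultimately show ?thesis by linarith
qed

definition phi :: "(nat \<Rightarrow> real) \<Rightarrow> real" where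
  "phi x = h (x 0) (x 1)"

definition phii :: "nat \<Rightarrow> (nat \<Rightarrow> real) \<Rightarrow> real" where
  "phii i x = h (x i) (x (Suc i))"

lemma phii_meas: "phii i \<in> borel_measurable (restrict_space borel Xsp)"
proof -
  have "continuous_on Xsp (phii i)"
    unfolding phii_def
    by (rule h_comp_cont) (auto intro!: continuous_on_product_then_coordinatewise continuous_on_id simp: Xsp_def)
  then show ?thesis by (rule borel_measurable_continuous_on_restrict)
qed

lemma phi_eq: "phi = phii 0"
  by (auto simp: phi_def phii_def)

lemma phii_shift: "phii (Suc i) = phii i \<circ> shift"
  by (auto simp: phii_def shift_def)

lemma phi_funpow: "phi ((shift ^^ i) z) = phii i z"
  by (simp add: phi_def phii_def shift_pow)

lemma inv_lower:
  assumes M: "M \<in> inv_prob_measures"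
  shows "hstar h \<le> integral\<^sup>L M phi"
proof -
  have ps: "prob_space M" and sM: "sets M = sets (restrict_space borel Xsp)" and inv: "distr M M shift = M"
    using M unfolding inv_prob_measures_def by auto
  interpret prob_space M by (rule ps)
  have spM: "space M = Xsp" using sets_eq_imp_space_eq[OF sM] space_N by simp
  have mcong: "measurable M M = measurable (restrict_space borel Xsp) (restrict_space borel Xsp)"
    by (rule measurable_cong_sets) (use sM in auto)
  have bcong: "borel_measurable M = borel_measurable (restrict_space borel Xsp)"
    by (rule measurable_cong_sets) (use sM in auto)
  have shM: "shift \<in> measurable M M" using shift_meas mcong by simp
  have pm: "phii i \<in> borel_measurable M" for i by (subst bcong) (rule phii_meas)
  have int: "integrable M (phii i)" for i
  proof (rule integrable_const_bound[where B = "\<bar>h 0 0\<bar> + 2 * L"])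
    show "AE x in M. norm (phii i x) \<le> \<bar>h 0 0\<bar> + 2 * L"
      by (rule AE_I2) (auto simp: spM phii_def intro!: h_bound Xsp_coord)
  qed (rule pm)
  have eqi: "integral\<^sup>L M (phii i) = integral\<^sup>L M (phii 0)" for i
  proof (induction i)
    case (Suc i)
    have "integral\<^sup>L M (phii (Suc i)) = integral\<^sup>L M (\<lambda>x. phii i (shift x))"
      by (simp add: phii_shift o_def)
    also have "\<dots> = integral\<^sup>L (distr M M shift) (phii i)"
      by (rule integral_distr[symmetric, OF shM pm])
    also have "\<dots> = integral\<^sup>L M (phii i)" using inv by simp
    finally show ?case using Suc by simp
  qed simp
  have key: "real n * hstar h - L \<le> real n * integral\<^sup>L M phi" if n: "n \<ge> 1" for n
  proof -
    have "integral\<^sup>L M (\<lambda>x. real n * hstar h - L) \<le> integral\<^sup>L M (\<lambda>x. \<Sum>i<n. phii i x)"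
    proof (rule integral_mono)
      show "integrable M (\<lambda>x. \<Sum>i<n. phii i x)" using int by auto
      fix x assume "x \<in> space M"
      then have x: "x \<in> Xsp" using spM by simp
      have "- L * \<bar>x n - x 0\<bar> \<le> (\<Sum>i<n. h (x i) (x (Suc i)) - hstar h)"
        by (rule chain_bound[OF n]) (use x Xsp_coord in auto)
      moreover have "\<bar>x n - x 0\<bar> \<le> 1" using Xsp_coord[OF x, of n] Xsp_coord[OF x, of 0] by (auto simp: abs_le_iff)
      ultimately have "- L \<le> (\<Sum>i<n. h (x i) (x (Suc i)) - hstar h)"
      proof -
        have "L * \<bar>x n - x 0\<bar> \<le> L * 1" by (rule mult_left_mono) (use \<open>\<bar>x n - x 0\<bar> \<le> 1\<close> L_pos in auto)
        then show ?thesis using \<open>- L * \<bar>x n - x 0\<bar> \<le> _\<close> by linarith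
      qed
      then show "real n * hstar h - L \<le> (\<Sum>i<n. phii i x)"
        by (simp add: phii_def sum_subtractf)
    qed simp
    also have "\<dots> = (\<Sum>i<n. integral\<^sup>L M (phii i))" using int by simp
    also have "\<dots> = real n * integral\<^sup>L M phi" by (subst eqi) (simp add: phi_eq)
    finally show ?thesis using prob_space by simp
  qed
  show ?thesis
  proof (rule ccontr)
    assume "\<not> hstar h \<le> integral\<^sup>L M phi"
    then have d: "0 < hstar h - integral\<^sup>L M phi" by simp
    obtain n :: nat where n: "L / (hstar h - integral\<^sup>L M phi) < real n" using reals_Archimedean2 by blast
    then have n1: "n \<ge> 1" using L_pos d by (cases n) (auto simp: field_simps)
    have "L < real n * (hstar h - integral\<^sup>L M phi)" using n d by (simp add: field_simps)
    then show False using key[OF n1] by (simp add: algebra_simps)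
  qed
qed

lemma alpha_eq: "alpha phi = hstar h"
proof -
  obtain a where a: "a \<in> {0..1}" "h a a = hstar h" using hstar_attained by blast
  define N where "N = restrict_space borel Xsp"
  define M0 where "M0 = return N (\<lambda>_. a)"
  have cs: "(\<lambda>_. a) \<in> space N" using Xsp_const[OF a(1)] space_N N_def by simp
  have shN: "shift \<in> measurable N N" using shift_meas N_def by simp
  have M0: "M0 \<in> inv_prob_measures"
  proof -
    have "distr M0 M0 shift = return M0 (shift (\<lambda>_. a))"
      unfolding M0_def
      by (rule distr_return) (use shN cs measurable_cong_sets[of "return N (\<lambda>_. a)" N "return N (\<lambda>_. a)" N] in auto)
    also have "shift (\<lambda>_. a) = (\<lambda>_. a)" by (simp add: shift_def)
    also have "return M0 (\<lambda>_. a) = return N (\<lambda>_. a)" unfolding M0_def by (rule return_cong) simp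
    finally show ?thesis
      unfolding inv_prob_measures_def using prob_space_return[OF cs] by (simp add: M0_def N_def)
  qed
  have "integral\<^sup>L M0 phi = phi (\<lambda>_. a)" unfolding M0_def
    by (rule integral_return) (use cs phii_meas[of 0] phi_eq N_def in auto)
  then have i0: "integral\<^sup>L M0 phi = hstar h" by (simp add: phi_def a(2))
  show ?thesis unfolding alpha_def
    by (rule cInf_eq_minimum[where z = "hstar h"]) (use M0 i0 inv_lower in \<open>force+\<close>)
qed

end


lemma Lim_antitone:
  fixes f :: "real \<Rightarrow> ereal"
  assumes mono: "\<And>a b. 0 < a \<Longrightarrow> a \<le> b \<Longrightarrow> f a \<ge> f b"
  shows "Lim (at_right 0) f = (SUP e\<in>{0<..}. f e)"
proof (rule tendsto_Lim)
  show "\<not> trivial_limit (at_right (0::real))" by simp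
  show "(f \<longlongrightarrow> (SUP e\<in>{0<..}. f e)) (at_right 0)"
  proof (rule order_tendstoI)
    fix y assume "y < (SUP e\<in>{0<..}. f e)"
    then obtain e0 where e0: "e0 \<in> {0<..}" "y < f e0" unfolding less_SUP_iff by blast
    show "eventually (\<lambda>x. y < f x) (at_right 0)"
    proof (rule eventually_at_rightI[of 0 e0])
      fix x assume "x \<in> {0<..<e0}"
      then show "y < f x" using mono[of x e0] e0 by fastforce
    qed (use e0 in simp)
  next
    fix y assume y: "(SUP e\<in>{0<..}. f e) < y"
    show "eventually (\<lambda>x. f x < y) (at_right 0)"
    proof (rule eventually_at_rightI[of 0 1])
      fix x :: real assume "x \<in> {0<..<1}"
      then have "f x \<le> (SUP e\<in>{0<..}. f e)" by (intro SUP_upper) auto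
      then show "f x < y" using y by auto
    qed simp
  qed
qed

lemma ereal_ge_eps:
  fixes S :: ereal
  assumes "\<And>e. 0 < e \<Longrightarrow> ereal (a - e) \<le> S"
  shows "ereal a \<le> S"
proof (rule ereal_le_epsilon2)
  fix e :: real assume "0 < e"
  then have "ereal (a - e) + ereal e \<le> S + ereal e" using assms by (intro add_right_mono) auto
  then show "ereal a \<le> S + ereal e" by simp
qed

context twist
begin

lemma phi_lam: "(\<lambda>x. h (x 0) (x 1)) = phi"
  by (auto simp: phi_def)

lemma birk_eq: "birkhoff phi n z = (\<Sum>i<n. h (z i) (z (Suc i)) - hstar h)"
  unfolding birkhoff_def alpha_eq phi_funpow phii_def ..

definition Meps :: "(nat \<Rightarrow> real) \<Rightarrow> (nat \<Rightarrow> real) \<Rightarrow> real \<Rightarrow> ereal" where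
  "Meps x y \<epsilon> = (INF p \<in> {(n, z). n \<ge> 1 \<and> z \<in> Bset x y n \<epsilon>}. ereal (birkhoff phi (fst p) (snd p)))"

definition Peps :: "(nat \<Rightarrow> real) \<Rightarrow> (nat \<Rightarrow> real) \<Rightarrow> real \<Rightarrow> ereal" where
  "Peps x y \<epsilon> = liminf (\<lambda>n. INF z \<in> Bset x y n \<epsilon>. ereal (birkhoff phi n z))"

lemma Bset_mono: "\<epsilon> \<le> \<epsilon>' \<Longrightarrow> Bset x y n \<epsilon> \<subseteq> Bset x y n \<epsilon>'"
  unfolding Bset_def by auto

lemma mane_SUP: "mane phi x y = (SUP e\<in>{0<..}. Meps x y e)"
  unfolding mane_def Meps_def[abs_def]
proof (rule Lim_antitone)
  fix a b :: real assume ab: "0 < a" "a \<le> b"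
  have "{(n, z). n \<ge> 1 \<and> z \<in> Bset x y n a} \<subseteq> {(n, z). n \<ge> 1 \<and> z \<in> Bset x y n b}"
    using Bset_mono[OF ab(2)] by fast
  then show "(INF p \<in> {(n, z). n \<ge> 1 \<and> z \<in> Bset x y n b}. ereal (birkhoff phi (fst p) (snd p)))
    \<le> (INF p \<in> {(n, z). n \<ge> 1 \<and> z \<in> Bset x y n a}. ereal (birkhoff phi (fst p) (snd p)))"
    by (rule INF_superset_mono) simp
qed

lemma peierls_SUP: "peierls phi x y = (SUP e\<in>{0<..}. Peps x y e)"
  unfolding peierls_def Peps_def[abs_def]
proof (rule Lim_antitone)
  fix a b :: real assume ab: "0 < a" "a \<le> b"
  show "liminf (\<lambda>n. INF z \<in> Bset x y n b. ereal (birkhoff phi n z)) \<le> liminf (\<lambda>n. INF z \<in> Bset x y n a. ereal (birkhoff phi n z))"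
    by (intro Liminf_mono always_eventually allI INF_superset_mono Bset_mono[OF ab(2)] order_refl)
qed

lemma Bset_coord:
  assumes "z \<in> Bset x y n \<epsilon>" "x \<in> Xsp" "y \<in> Xsp"
  shows "z \<in> Xsp" "\<bar>x k - z k\<bar> < 2 ^ (k + 1) * \<epsilon>" "\<bar>z (k + n) - y k\<bar> < 2 ^ (k + 1) * \<epsilon>"
proof -
  show z: "z \<in> Xsp" using assms unfolding Bset_def by auto
  have "\<bar>x k - z k\<bar> \<le> 2 ^ (k + 1) * dX x z" by (rule dX_coord[OF assms(2) z])
  also have "\<dots> < 2 ^ (k + 1) * \<epsilon>" using assms unfolding Bset_def by auto
  finally show "\<bar>x k - z k\<bar> < 2 ^ (k + 1) * \<epsilon>" .
  have "\<bar>(shift ^^ n) z k - y k\<bar> \<le> 2 ^ (k + 1) * dX ((shift ^^ n) z) y"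
    by (rule dX_coord[OF Xsp_shift[OF z] assms(3)])
  also have "\<dots> < 2 ^ (k + 1) * \<epsilon>" using assms unfolding Bset_def by auto
  finally show "\<bar>z (k + n) - y k\<bar> < 2 ^ (k + 1) * \<epsilon>" by (simp add: shift_pow)
qed

lemma birk_lower:
  assumes "z \<in> Bset x y n \<epsilon>" "x \<in> Xsp" "y \<in> Xsp"
  shows "- L * (\<bar>x 0 - y 0\<bar> + 4 * \<epsilon>) \<le> birkhoff phi n z"
proof (cases "n = 0")
  case True
  have "0 \<le> \<epsilon>" using Bset_coord(2)[OF assms, of 0] by auto
  then show ?thesis using True L_pos by (simp add: birk_eq)
next
  case False
  have z: "z \<in> Xsp" by (rule Bset_coord(1)[OF assms])
  have "- L * \<bar>z n - z 0\<bar> \<le> (\<Sum>i<n. h (z i) (z (Suc i)) - hstar h)"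
    by (rule chain_bound) (use False z Xsp_coord in auto)
  moreover have "\<bar>z n - z 0\<bar> \<le> \<bar>x 0 - y 0\<bar> + 4 * \<epsilon>"
    using Bset_coord(2)[OF assms, of 0] Bset_coord(3)[OF assms, of 0] by auto
  then have "L * \<bar>z n - z 0\<bar> \<le> L * (\<bar>x 0 - y 0\<bar> + 4 * \<epsilon>)" using L_pos by (intro mult_left_mono) auto
  ultimately show ?thesis by (simp add: birk_eq)
qed

lemma Meps_lower:
  assumes "x \<in> Xsp" "y \<in> Xsp"
  shows "ereal (- L * (\<bar>x 0 - y 0\<bar> + 4 * \<epsilon>)) \<le> Meps x y \<epsilon>"
  unfolding Meps_def by (rule INF_greatest) (use birk_lower assms in auto)

lemma Peps_lower:
  assumes "x \<in> Xsp" "y \<in> Xsp"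
  shows "ereal (- L * (\<bar>x 0 - y 0\<bar> + 4 * \<epsilon>)) \<le> Peps x y \<epsilon>"
  unfolding Peps_def
  by (intro Liminf_bounded always_eventually allI INF_greatest) (use birk_lower assms in auto)



lemma chain_bound_diag:
  assumes "n \<ge> 1" "\<And>i. i \<le> n \<Longrightarrow> z i \<in> {0..1}"
  shows "h (z 0) (z 0) - hstar h - L * \<bar>z n - z 0\<bar> \<le> (\<Sum>i<n. h (z i) (z (Suc i)) - hstar h)"
proof -
  have set: "set (map z [0..<n]) \<subseteq> {0..1}" using assms(2) by auto
  have "sum_list (map (\<lambda>w. h w w) (map z [0..<n])) \<le> ccost (map z [0..<n])"
    by (rule cycle_basic) (use assms set in auto)
  moreover have "map z [0..<n] = z 0 # map z [1..<n]" using assms(1) by (simp add: upt_conv_Cons)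
  moreover have "real (length (map z [1..<n])) * hstar h \<le> sum_list (map (\<lambda>w. h w w) (map z [1..<n]))"
    by (rule sum_diag_ge) (use assms(2) in auto)
  moreover have "h (z (n - 1)) (z 0) - h (z (n - 1)) (z n) \<le> L * \<bar>z n - z 0\<bar>"
    using h_lip[of "z (n - 1)" "z n" "z (n - 1)" "z 0"] assms by (auto simp: abs_le_iff)
  ultimately have "h (z 0) (z 0) + real (n - 1) * hstar h - L * \<bar>z n - z 0\<bar> \<le> (\<Sum>i<n. h (z i) (z (Suc i)))"
    using chain_ccost[OF assms(1), of z] by (simp add: algebra_simps)
  moreover have "real (n - 1) * hstar h = real n * hstar h - hstar h" using assms(1) by (simp add: algebra_simps of_nat_diff)
  ultimately show ?thesis by (simp add: sum_subtractf)
qed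

lemma const_Bset1: "a \<in> {0..1} \<Longrightarrow> \<epsilon> > 0 \<Longrightarrow> (\<lambda>_. a) \<in> Bset (\<lambda>_. a) (\<lambda>_. a) n \<epsilon>"
  unfolding Bset_def using Xsp_const[of a] dX_const[of a a] by (simp add: shift_pow)

lemma const_in_aubry:
  assumes a: "a \<in> mset_h h"
  shows "(\<lambda>_. a) \<in> aubry phi"
proof -
  have a01: "a \<in> {0..1}" and ha: "h a a = hstar h" using a unfolding mset_h_def by auto
  let ?x = "\<lambda>_::nat. a"
  have up: "Meps ?x ?x e \<le> 0" if "e > 0" for e
  proof -
    have "(1, ?x) \<in> {(n, z). n \<ge> 1 \<and> z \<in> Bset ?x ?x n e}" using const_Bset1[OF a01 that] by auto
    moreover have "birkhoff phi 1 ?x = 0" by (simp add: birk_eq ha)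
    ultimately show ?thesis unfolding Meps_def by (metis (no_types, lifting) INF_lower2 fst_conv order_refl snd_conv zero_ereal_def)
  qed
  have "mane phi ?x ?x \<le> 0" unfolding mane_SUP by (rule SUP_least) (use up in auto)
  moreover have "ereal 0 \<le> mane phi ?x ?x"
  proof (rule ereal_ge_eps)
    fix e :: real assume e: "0 < e"
    have "ereal (- L * (\<bar>a - a\<bar> + 4 * (e / (4 * L)))) \<le> Meps ?x ?x (e / (4 * L))"
      using Meps_lower[of ?x ?x "e / (4 * L)"] Xsp_const[OF a01] by simp
    also have "\<dots> \<le> mane phi ?x ?x" unfolding mane_SUP by (rule SUP_upper) (use e L_pos in auto)
    finally show "ereal (0 - e) \<le> mane phi ?x ?x" using L_pos by simp
  qed
  ultimately have "mane phi ?x ?x = 0" by (simp add: zero_ereal_def)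
  then show ?thesis unfolding aubry_def using Xsp_const[OF a01] by simp
qed

lemma aubry_x0:
  assumes x: "x \<in> aubry phi"
  shows "x 0 \<in> mset_h h"
proof (rule ccontr)
  assume nm: "x 0 \<notin> mset_h h"
  have xX: "x \<in> Xsp" and m0: "mane phi x x = 0" using x unfolding aubry_def by auto
  have x01: "x 0 \<in> {0..1}" using Xsp_coord[OF xX] .
  define \<kappa> where "\<kappa> = h (x 0) (x 0) - hstar h"
  have kpos: "\<kappa> > 0" using nm x01 hstar_le[OF x01] unfolding \<kappa>_def mset_h_def by auto
  define \<epsilon> where "\<epsilon> = \<kappa> / (16 * L)"
  have epos: "\<epsilon> > 0" using kpos L_pos unfolding \<epsilon>_def by auto
  have "ereal (\<kappa> - 8 * L * \<epsilon>) \<le> Meps x x \<epsilon>"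
    unfolding Meps_def
  proof (rule INF_greatest)
    fix p assume "p \<in> {(n, z). n \<ge> 1 \<and> z \<in> Bset x x n \<epsilon>}"
    then obtain n z where p: "p = (n, z)" "n \<ge> 1" "z \<in> Bset x x n \<epsilon>" by auto
    have z: "z \<in> Xsp" using Bset_coord(1)[OF p(3) xX xX] .
    have c0: "\<bar>x 0 - z 0\<bar> < 2 * \<epsilon>" using Bset_coord(2)[OF p(3) xX xX, of 0] by simp
    have cn: "\<bar>z n - x 0\<bar> < 2 * \<epsilon>" using Bset_coord(3)[OF p(3) xX xX, of 0] by simp
    have "h (z 0) (z 0) - hstar h - L * \<bar>z n - z 0\<bar> \<le> (\<Sum>i<n. h (z i) (z (Suc i)) - hstar h)"
      by (rule chain_bound_diag) (use p z Xsp_coord in auto)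
    moreover have "\<bar>h (x 0) (x 0) - h (z 0) (z 0)\<bar> \<le> L * (\<bar>x 0 - z 0\<bar> + \<bar>x 0 - z 0\<bar>)"
      by (rule h_lip) (use x01 Xsp_coord[OF z] in auto)
    moreover have "L * (\<bar>x 0 - z 0\<bar> + \<bar>x 0 - z 0\<bar>) \<le> L * (4 * \<epsilon>)"
      using c0 L_pos by (intro mult_left_mono) auto
    moreover have "L * \<bar>z n - z 0\<bar> \<le> L * (4 * \<epsilon>)"
      using c0 cn L_pos by (intro mult_left_mono) auto
    ultimately have "\<kappa> - 8 * L * \<epsilon> \<le> birkhoff phi n z"
      unfolding birk_eq \<kappa>_def by (simp add: abs_le_iff algebra_simps)
    then show "ereal (\<kappa> - 8 * L * \<epsilon>) \<le> ereal (birkhoff phi (fst p) (snd p))" using p by simp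
  qed
  also have "\<dots> \<le> mane phi x x" unfolding mane_SUP by (rule SUP_upper) (use epos in auto)
  finally have "\<kappa> - 8 * L * \<epsilon> \<le> 0" using m0 by (simp add: zero_ereal_def)
  moreover have "8 * L * \<epsilon> = \<kappa> / 2" unfolding \<epsilon>_def using L_pos by (simp add: field_simps)
  ultimately show False using kpos by simp
qed

end

locale twist_td = twist +
  assumes td: "totally_disconnected (mset_h h)"
begin

lemma mset01: "a \<in> mset_h h \<Longrightarrow> a \<in> {0..1}"
  unfolding mset_h_def by auto

lemma gap_up:
  assumes a: "a \<in> mset_h h" and b: "b \<in> {0..1}" "a < b"
  shows "\<exists>c. a < c \<and> c < b \<and> c \<notin> mset_h h"
proof -
  define T where "T = {a..(a + b) / 2}"
  have "\<not> T \<subseteq> mset_h h"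
  proof
    assume "T \<subseteq> mset_h h"
    then obtain p where "T \<subseteq> {p}" using td connected_Icc unfolding totally_disconnected_def T_def by blast
    moreover have "a \<in> T" "(a + b) / 2 \<in> T" using b unfolding T_def by auto
    ultimately have "a = (a + b) / 2" by blast
    then show False using b by simp
  qed
  then obtain c where "c \<in> T" "c \<notin> mset_h h" by auto
  moreover have "c \<noteq> a" using a \<open>c \<notin> mset_h h\<close> by auto
  ultimately show ?thesis using b unfolding T_def by (intro exI[of _ c]) auto
qed

lemma gap_down:
  assumes a: "a \<in> mset_h h" and b: "b \<in> {0..1}" "b < a"
  shows "\<exists>c. b < c \<and> c < a \<and> c \<notin> mset_h h"
proof -
  define T where "T = {(a + b) / 2..a}"
  have "\<not> T \<subseteq> mset_h h"
  proof
    assume "T \<subseteq> mset_h h"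
    then obtain p where "T \<subseteq> {p}" using td connected_Icc unfolding totally_disconnected_def T_def by blast
    moreover have "a \<in> T" "(a + b) / 2 \<in> T" using b unfolding T_def by auto
    ultimately have "a = (a + b) / 2" by blast
    then show False using b by simp
  qed
  then obtain c where "c \<in> T" "c \<notin> mset_h h" by auto
  moreover have "c \<noteq> a" using a \<open>c \<notin> mset_h h\<close> by auto
  ultimately show ?thesis using b unfolding T_def by (intro exI[of _ c]) auto
qed



lemma aubry_const:
  assumes x: "x \<in> aubry phi"
  shows "x = (\<lambda>_. x 0)"
proof (rule ccontr)
  assume "x \<noteq> (\<lambda>_. x 0)"
  then have ex: "\<exists>k. x k \<noteq> x 0" by auto
  define k where "k = (LEAST k. x k \<noteq> x 0)"
  have xk: "x k \<noteq> x 0" using LeastI_ex[OF ex] unfolding k_def .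
  have before: "\<And>j. j < k \<Longrightarrow> x j = x 0" using not_less_Least unfolding k_def by blast
  have k1: "k \<ge> 1" using xk by (cases k) auto
  have xX: "x \<in> Xsp" and m0: "mane phi x x = 0" using x unfolding aubry_def by auto
  have x0m: "x 0 \<in> mset_h h" by (rule aubry_x0[OF x])
  have xk01: "x k \<in> {0..1}" "x 0 \<in> {0..1}" using Xsp_coord[OF xX] by auto
  obtain c where c: "(x 0 < c \<and> c < x k) \<or> (x k < c \<and> c < x 0)" "c \<notin> mset_h h"
  proof (cases "x 0 < x k")
    case True
    then show ?thesis using gap_up[OF x0m xk01(1)] that by blast
  next
    case False
    then have "x k < x 0" using xk by auto
    then show ?thesis using gap_down[OF x0m xk01(1)] that by blast
  qed
  have c01: "c \<in> {0..1}" using c(1) xk01 by auto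
  obtain \<eta> where eta: "\<eta> > 0" "\<forall>(n::nat) (z::nat \<Rightarrow> real) j k. n \<ge> 1 \<longrightarrow> (\<forall>i\<le>n. z i \<in> {0..1}) \<longrightarrow> j < n \<longrightarrow> k < n
     \<longrightarrow> z j \<le> c \<longrightarrow> c \<le> z k \<longrightarrow> \<eta> - L * \<bar>z n - z 0\<bar> \<le> (\<Sum>i<n. h (z i) (z (Suc i)) - hstar h)"
    using chain_bound_eta[OF c01 c(2)] by blast
  define d where "d = min \<bar>c - x 0\<bar> \<bar>c - x k\<bar>"
  have dpos: "d > 0" using c(1) unfolding d_def by auto
  have dsum: "2 * d \<le> \<bar>x k - x 0\<bar>" using c(1) unfolding d_def by (auto simp: min_def)
  define \<epsilon> where "\<epsilon> = min (d / 2 ^ (k + 3)) (\<eta> / (8 * L))"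
  have epos: "\<epsilon> > 0" using dpos eta(1) L_pos unfolding \<epsilon>_def by auto
  have e1: "2 ^ (k + 1) * \<epsilon> \<le> d / 4"
  proof -
    have "\<epsilon> \<le> d / 2 ^ (k + 3)" unfolding \<epsilon>_def by simp
    then have "2 ^ (k + 1) * \<epsilon> \<le> 2 ^ (k + 1) * (d / 2 ^ (k + 3))" by (intro mult_left_mono) auto
    also have "\<dots> = d / 4" by (simp add: power_add field_simps)
    finally show ?thesis .
  qed
  have e2: "2 * \<epsilon> \<le> 2 ^ (k + 1) * \<epsilon>"
  proof -
    have "(2::real) ^ 1 \<le> 2 ^ (k + 1)" by (rule power_increasing) auto
    then show ?thesis using epos by (intro mult_right_mono) auto
  qed
  have e3: "4 * L * \<epsilon> \<le> \<eta> / 2"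
  proof -
    have "\<epsilon> \<le> \<eta> / (8 * L)" unfolding \<epsilon>_def by simp
    then have "4 * L * \<epsilon> \<le> 4 * L * (\<eta> / (8 * L))" using L_pos by (intro mult_left_mono) auto
    also have "\<dots> = \<eta> / 2" using L_pos by (simp add: field_simps)
    finally show ?thesis .
  qed
  have "ereal (\<eta> - 4 * L * \<epsilon>) \<le> Meps x x \<epsilon>"
    unfolding Meps_def
  proof (rule INF_greatest)
    fix p assume "p \<in> {(n, z). n \<ge> 1 \<and> z \<in> Bset x x n \<epsilon>}"
    then obtain n z where p: "p = (n, z)" "n \<ge> 1" "z \<in> Bset x x n \<epsilon>" by auto
    have z: "z \<in> Xsp" using Bset_coord(1)[OF p(3) xX xX] .
    have c0: "\<bar>x 0 - z 0\<bar> < 2 * \<epsilon>" using Bset_coord(2)[OF p(3) xX xX, of 0] by simp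
    have cn: "\<bar>z n - x 0\<bar> < 2 * \<epsilon>" using Bset_coord(3)[OF p(3) xX xX, of 0] by simp
    have ck: "\<bar>x k - z k\<bar> < 2 ^ (k + 1) * \<epsilon>" using Bset_coord(2)[OF p(3) xX xX, of k] by simp
    have nk: "k < n"
    proof (rule ccontr)
      assume "\<not> k < n"
      then have kn: "k - n + n = k" "k - n < k" using p(2) by auto
      have "\<bar>z (k - n + n) - x (k - n)\<bar> < 2 ^ (k - n + 1) * \<epsilon>" using Bset_coord(3)[OF p(3) xX xX, of "k - n"] .
      moreover have "(2::real) ^ (k - n + 1) \<le> 2 ^ (k + 1)" by (rule power_increasing) auto
      then have "2 ^ (k - n + 1) * \<epsilon> \<le> 2 ^ (k + 1) * \<epsilon>" using epos by (intro mult_right_mono) auto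
      ultimately have "\<bar>z k - x 0\<bar> < 2 ^ (k + 1) * \<epsilon>" using kn before[of "k - n"] by simp
      then have "\<bar>x k - x 0\<bar> < d / 2" using ck e1 by linarith
      then show False using dsum dpos by linarith
    qed
    have zb: "\<forall>i\<le>n. z i \<in> {0..1}" using z Xsp_coord by auto
    have "\<eta> - L * \<bar>z n - z 0\<bar> \<le> (\<Sum>i<n. h (z i) (z (Suc i)) - hstar h)"
    proof (cases "x 0 < c \<and> c < x k")
      case True
      have dd: "d \<le> c - x 0" "d \<le> x k - c" using True unfolding d_def by auto
      have "z 0 \<le> c" "c \<le> z k" using dd c0 ck e1 e2 unfolding abs_less_iff by linarith+
      moreover have "0 < n" using p(2) by simp
      ultimately show ?thesis using eta(2)[rule_format, of n z 0 k] zb p(2) nk by blast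
    next
      case False
      then have F: "x k < c \<and> c < x 0" using c(1) by auto
      have dd: "d \<le> x 0 - c" "d \<le> c - x k" using F unfolding d_def by auto
      have "z k \<le> c" "c \<le> z 0" using dd c0 ck e1 e2 unfolding abs_less_iff by linarith+
      moreover have "0 < n" using p(2) by simp
      ultimately show ?thesis using eta(2)[rule_format, of n z k 0] zb p(2) nk by blast
    qed
    moreover have "L * \<bar>z n - z 0\<bar> \<le> L * (4 * \<epsilon>)" using c0 cn L_pos by (intro mult_left_mono) auto
    ultimately have "\<eta> - 4 * L * \<epsilon> \<le> birkhoff phi n z" unfolding birk_eq by simp
    then show "ereal (\<eta> - 4 * L * \<epsilon>) \<le> ereal (birkhoff phi (fst p) (snd p))" using p by simp
  qed
  also have "\<dots> \<le> mane phi x x" unfolding mane_SUP by (rule SUP_upper) (use epos in auto)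
  finally have "\<eta> - 4 * L * \<epsilon> \<le> 0" using m0 by (simp add: zero_ereal_def)
  then show False using e3 eta(1) by simp
qed

lemma aubry_char: "aubry phi = (\<lambda>a. \<lambda>_. a) ` mset_h h"
proof
  show "aubry phi \<subseteq> (\<lambda>a. \<lambda>_. a) ` mset_h h"
  proof
    fix x assume x: "x \<in> aubry phi"
    then show "x \<in> (\<lambda>a. \<lambda>_. a) ` mset_h h" using aubry_const[OF x] aubry_x0[OF x] by (metis image_eqI)
  qed
  show "(\<lambda>a. \<lambda>_. a) ` mset_h h \<subseteq> aubry phi" using const_in_aubry by auto
qed

end


lemma sum_split_add: "(\<Sum>i<n + m. g i) = (\<Sum>i<n. g i) + (\<Sum>j<m. g (n + j))" for g :: "nat \<Rightarrow> real"
  by (induction m) auto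

lemma liminf_pair:
  fixes f g :: "nat \<Rightarrow> (nat \<Rightarrow> real) \<Rightarrow> real"
  assumes K: "\<And>n m z w. n \<ge> 1 \<Longrightarrow> m \<ge> 1 \<Longrightarrow> z \<in> A n \<Longrightarrow> w \<in> B m \<Longrightarrow> K \<le> f n z + g m w"
    and lf: "\<And>n z. z \<in> A n \<Longrightarrow> C \<le> f n z" and lg: "\<And>m w. w \<in> B m \<Longrightarrow> C \<le> g m w"
  shows "ereal K \<le> liminf (\<lambda>n. INF z\<in>A n. ereal (f n z)) + liminf (\<lambda>m. INF w\<in>B m. ereal (g m w))"
proof -
  define U where "U = liminf (\<lambda>n. INF z\<in>A n. ereal (f n z))"
  define V where "V = liminf (\<lambda>m. INF w\<in>B m. ereal (g m w))"
  have UC: "ereal C \<le> U" unfolding U_def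
    by (intro Liminf_bounded always_eventually allI INF_greatest) (use lf in auto)
  have VC: "ereal C \<le> V" unfolding V_def
    by (intro Liminf_bounded always_eventually allI INF_greatest) (use lg in auto)
  show ?thesis
  proof (cases U)
    case PInf
    then show ?thesis using VC unfolding U_def[symmetric] V_def[symmetric] by auto
  next
    case MInf
    then show ?thesis using UC by auto
  next
    case (real r)
    have gw: "K - r \<le> g m w" if mw: "m \<ge> 1" "w \<in> B m" for m w
    proof -
      have "ereal (K - g m w) \<le> U" unfolding U_def
      proof (intro Liminf_bounded eventually_sequentiallyI[of 1] INF_greatest)
        fix n z assume "1 \<le> n" "z \<in> A n"
        then show "ereal (K - g m w) \<le> ereal (f n z)" using K[of n m z w] mw by simp
      qed
      then show ?thesis using real by simp
    qed
    have "ereal (K - r) \<le> V" unfolding V_def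
    proof (intro Liminf_bounded eventually_sequentiallyI[of 1] INF_greatest)
      fix m w assume "1 \<le> m" "w \<in> B m"
      then show "ereal (K - r) \<le> ereal (g m w)" using gw by simp
    qed
    then have "ereal r + ereal (K - r) \<le> ereal r + V" by (rule add_left_mono)
    then have "ereal K \<le> ereal r + V" by simp
    then show ?thesis using real unfolding U_def[symmetric] V_def[symmetric] by simp
  qed
qed

context twist
begin

lemma switch_Bset:
  assumes "a \<in> {0..1}" "b \<in> {0..1}" "\<bar>a - b\<bar> / 2 ^ n < \<epsilon>"
  shows "(\<lambda>i. if i < n then a else b) \<in> Bset (\<lambda>_. a) (\<lambda>_. b) n \<epsilon>"
proof -
  have "0 \<le> \<bar>a - b\<bar> / 2 ^ n" by simp
  then have "0 < \<epsilon>" using assms(3) by linarith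
  moreover have "(shift ^^ n) (\<lambda>i. if i < n then a else b) = (\<lambda>_. b)" by (simp add: shift_pow)
  ultimately show ?thesis unfolding Bset_def using assms dX_switch[of a n b] dX_const[of b b]
    by (auto simp: Xsp_def)
qed

lemma birk_switch:
  assumes "n \<ge> 1" "a \<in> mset_h h"
  shows "birkhoff phi n (\<lambda>i. if i < n then a else b) = h a b - hstar h"
proof -
  obtain m where n: "n = Suc m" using assms(1) by (cases n) auto
  have ha: "h a a = hstar h" using assms(2) unfolding mset_h_def by auto
  have "(\<Sum>i<m. h (if i < n then a else b) (if Suc i < n then a else b) - hstar h) = 0"
    by (rule sum.neutral) (auto simp: n ha)
  then show ?thesis unfolding birk_eq n by simp
qed

lemma peierls_upper:
  assumes a: "a \<in> mset_h h" and b: "b \<in> {0..1}"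
  shows "peierls phi (\<lambda>_. a) (\<lambda>_. b) \<le> ereal (L * \<bar>a - b\<bar>)"
proof -
  have a01: "a \<in> {0..1}" using a unfolding mset_h_def by auto
  have hab: "h a b - hstar h \<le> L * \<bar>a - b\<bar>"
  proof -
    have "h a a = hstar h" using a unfolding mset_h_def by auto
    moreover have "\<bar>h a b - h a a\<bar> \<le> L * (\<bar>a - a\<bar> + \<bar>b - a\<bar>)" by (rule h_lip) (use a01 b in auto)
    ultimately show ?thesis by (simp add: abs_le_iff abs_minus_commute)
  qed
  show ?thesis unfolding peierls_SUP
  proof (rule SUP_least)
    fix e :: real assume "e \<in> {0<..}"
    then have e: "e > 0" by simp
    obtain N :: nat where N: "\<bar>a - b\<bar> / e < 2 ^ N" using real_arch_pow[of 2 "\<bar>a - b\<bar> / e"] by auto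
    have ev: "\<And>n. n \<ge> max N 1 \<Longrightarrow> (INF z \<in> Bset (\<lambda>_. a) (\<lambda>_. b) n e. ereal (birkhoff phi n z)) \<le> ereal (L * \<bar>a - b\<bar>)"
    proof -
      fix n assume n: "n \<ge> max N 1"
      have "(2::real) ^ N \<le> 2 ^ n" by (rule power_increasing) (use n in auto)
      then have "e * 2 ^ N \<le> e * 2 ^ n" using e by (intro mult_left_mono) auto
      moreover have "\<bar>a - b\<bar> < e * 2 ^ N" using N e by (simp add: field_simps)
      ultimately have "\<bar>a - b\<bar> < e * 2 ^ n" by linarith
      then have "\<bar>a - b\<bar> / 2 ^ n < e" by (simp add: field_simps)
      then have "(\<lambda>i. if i < n then a else b) \<in> Bset (\<lambda>_. a) (\<lambda>_. b) n e" by (rule switch_Bset[OF a01 b])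
      moreover have "birkhoff phi n (\<lambda>i. if i < n then a else b) = h a b - hstar h"
        by (rule birk_switch) (use n a in auto)
      ultimately show "(INF z \<in> Bset (\<lambda>_. a) (\<lambda>_. b) n e. ereal (birkhoff phi n z)) \<le> ereal (L * \<bar>a - b\<bar>)"
        using hab by (metis (no_types, lifting) INF_lower2 ereal_less_eq(3))
    qed
    show "Peps (\<lambda>_. a) (\<lambda>_. b) e \<le> ereal (L * \<bar>a - b\<bar>)" unfolding Peps_def
    proof (rule Liminf_le)
      show "\<forall>\<^sub>F n in sequentially. (INF z \<in> Bset (\<lambda>_. a) (\<lambda>_. b) n e. ereal (birkhoff phi n z)) \<le> ereal (L * \<bar>a - b\<bar>)"
        unfolding eventually_sequentially using ev by blast
    qed simp
  qed
qed

lemma peierls_lower: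
  assumes "x \<in> Xsp" "y \<in> Xsp"
  shows "ereal (- L * \<bar>x 0 - y 0\<bar>) \<le> peierls phi x y"
proof (rule ereal_ge_eps)
  fix e :: real assume e: "0 < e"
  have "ereal (- L * (\<bar>x 0 - y 0\<bar> + 4 * (e / (4 * L)))) \<le> Peps x y (e / (4 * L))"
    by (rule Peps_lower[OF assms])
  also have "\<dots> \<le> peierls phi x y" unfolding peierls_SUP by (rule SUP_upper) (use e L_pos in auto)
  also have "- L * (\<bar>x 0 - y 0\<bar> + 4 * (e / (4 * L))) = - L * \<bar>x 0 - y 0\<bar> - e"
    using L_pos by (simp add: field_simps)
  finally show "ereal (- L * \<bar>x 0 - y 0\<bar> - e) \<le> peierls phi x y" .
qed

lemma delta_self:
  assumes "a \<in> mset_h h"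
  shows "delta phi (\<lambda>_. a) (\<lambda>_. a) = 0"
proof -
  have a01: "a \<in> {0..1}" using assms unfolding mset_h_def by auto
  have "peierls phi (\<lambda>_. a) (\<lambda>_. a) \<le> 0" using peierls_upper[OF assms a01] by (simp add: zero_ereal_def)
  moreover have "0 \<le> peierls phi (\<lambda>_. a) (\<lambda>_. a)" using peierls_lower[OF Xsp_const[OF a01] Xsp_const[OF a01]]
    by (simp add: zero_ereal_def)
  ultimately have "peierls phi (\<lambda>_. a) (\<lambda>_. a) = 0" by simp
  then show ?thesis unfolding delta_def by simp
qed

lemma delta_upper:
  assumes "a \<in> mset_h h" "b \<in> mset_h h"
  shows "delta phi (\<lambda>_. a) (\<lambda>_. b) \<le> ereal (2 * L * \<bar>a - b\<bar>)"
proof -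
  have ab: "a \<in> {0..1}" "b \<in> {0..1}" using assms unfolding mset_h_def by auto
  have "delta phi (\<lambda>_. a) (\<lambda>_. b) \<le> ereal (L * \<bar>a - b\<bar>) + ereal (L * \<bar>b - a\<bar>)"
    unfolding delta_def by (intro add_mono peierls_upper assms ab)
  then show ?thesis by (simp add: abs_minus_commute mult.assoc)
qed



lemma pair_bound:
  assumes ab: "a \<in> {0..1}" "b \<in> {0..1}"
    and eta: "\<forall>(n::nat) (z::nat \<Rightarrow> real) j k. n \<ge> 1 \<longrightarrow> (\<forall>i\<le>n. z i \<in> {0..1}) \<longrightarrow> j < n \<longrightarrow> k < n
     \<longrightarrow> z j \<le> c \<longrightarrow> c \<le> z k \<longrightarrow> \<eta> - L * \<bar>z n - z 0\<bar> \<le> (\<Sum>i<n. h (z i) (z (Suc i)) - hstar h)"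
    and zB: "z \<in> Bset (\<lambda>_. a) (\<lambda>_. b) n \<epsilon>" and wB: "w \<in> Bset (\<lambda>_. b) (\<lambda>_. a) m \<epsilon>"
    and nm: "n \<ge> 1" "m \<ge> 1"
    and ord: "(z 0 \<le> c \<and> c \<le> w 0) \<or> (w 0 \<le> c \<and> c \<le> z 0)"
  shows "\<eta> - 8 * L * \<epsilon> \<le> birkhoff phi n z + birkhoff phi m w"
proof -
  have xa: "(\<lambda>_. a) \<in> Xsp" and xb: "(\<lambda>_. b) \<in> Xsp" using Xsp_const ab by auto
  have zX: "z \<in> Xsp" using Bset_coord(1)[OF zB xa xb] .
  have wX: "w \<in> Xsp" using Bset_coord(1)[OF wB xb xa] .
  have z0: "\<bar>a - z 0\<bar> < 2 * \<epsilon>" using Bset_coord(2)[OF zB xa xb, of 0] by simp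
  have zn: "\<bar>z n - b\<bar> < 2 * \<epsilon>" using Bset_coord(3)[OF zB xa xb, of 0] by simp
  have w0: "\<bar>b - w 0\<bar> < 2 * \<epsilon>" using Bset_coord(2)[OF wB xb xa, of 0] by simp
  have wm: "\<bar>w m - a\<bar> < 2 * \<epsilon>" using Bset_coord(3)[OF wB xb xa, of 0] by simp
  obtain n' where n': "n = Suc n'" using nm(1) by (cases n) auto
  define y where "y i = (if i < n then z i else w (i - n))" for i
  have y0: "y 0 = z 0" and yn: "y n = w 0" and ynm: "y (n + m) = w m" using nm unfolding y_def by auto
  have y01: "\<forall>i\<le>n + m. y i \<in> {0..1}" using zX wX Xsp_coord unfolding y_def by auto
  have chain: "\<eta> - L * \<bar>y (n + m) - y 0\<bar> \<le> (\<Sum>i<n + m. h (y i) (y (Suc i)) - hstar h)"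
  proof (cases "z 0 \<le> c \<and> c \<le> w 0")
    case True
    then show ?thesis using eta[rule_format, of "n + m" y 0 n] y01 nm y0 yn by simp
  next
    case False
    then have "w 0 \<le> c \<and> c \<le> z 0" using ord by auto
    then show ?thesis using eta[rule_format, of "n + m" y n 0] y01 nm y0 yn by simp
  qed
  have S: "(\<Sum>i<n + m. h (y i) (y (Suc i)) - hstar h) =
     (\<Sum>i<n'. h (z i) (z (Suc i)) - hstar h) + (h (z n') (w 0) - hstar h) + (\<Sum>j<m. h (w j) (w (Suc j)) - hstar h)"
  proof -
    have "(\<Sum>i<n + m. h (y i) (y (Suc i)) - hstar h) =
      (\<Sum>i<n. h (y i) (y (Suc i)) - hstar h) + (\<Sum>j<m. h (y (n + j)) (y (Suc (n + j))) - hstar h)"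
      by (rule sum_split_add)
    also have "(\<Sum>j<m. h (y (n + j)) (y (Suc (n + j))) - hstar h) = (\<Sum>j<m. h (w j) (w (Suc j)) - hstar h)"
      by (rule sum.cong) (auto simp: y_def)
    also have "(\<Sum>i<n. h (y i) (y (Suc i)) - hstar h) = (\<Sum>i<n'. h (y i) (y (Suc i)) - hstar h) + (h (y n') (y n) - hstar h)"
      unfolding n' by simp
    also have "(\<Sum>i<n'. h (y i) (y (Suc i)) - hstar h) = (\<Sum>i<n'. h (z i) (z (Suc i)) - hstar h)"
      by (rule sum.cong) (auto simp: y_def n')
    also have "y n' = z n'" unfolding y_def n' by simp
    finally show ?thesis using yn by simp
  qed
  have Z: "birkhoff phi n z = (\<Sum>i<n'. h (z i) (z (Suc i)) - hstar h) + (h (z n') (z n) - hstar h)"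
    unfolding birk_eq n' by simp
  have W: "birkhoff phi m w = (\<Sum>j<m. h (w j) (w (Suc j)) - hstar h)" by (rule birk_eq)
  have l1: "\<bar>h (z n') (z n) - h (z n') (w 0)\<bar> \<le> L * (\<bar>z n' - z n'\<bar> + \<bar>z n - w 0\<bar>)"
    by (rule h_lip) (use zX wX Xsp_coord in auto)
  have l2: "L * \<bar>z n - w 0\<bar> \<le> L * (4 * \<epsilon>)" using zn w0 L_pos by (intro mult_left_mono) auto
  have l3: "L * \<bar>y (n + m) - y 0\<bar> \<le> L * (4 * \<epsilon>)" unfolding ynm y0 using z0 wm L_pos by (intro mult_left_mono) auto
  show ?thesis using chain S Z W l1 l2 l3 by (simp add: abs_le_iff)
qed

lemma delta_lower:
  assumes a: "a \<in> mset_h h" and b: "b \<in> mset_h h"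
    and c: "(a < c \<and> c < b) \<or> (b < c \<and> c < a)"
    and eta: "\<forall>(n::nat) (z::nat \<Rightarrow> real) j k. n \<ge> 1 \<longrightarrow> (\<forall>i\<le>n. z i \<in> {0..1}) \<longrightarrow> j < n \<longrightarrow> k < n
     \<longrightarrow> z j \<le> c \<longrightarrow> c \<le> z k \<longrightarrow> \<eta> - L * \<bar>z n - z 0\<bar> \<le> (\<Sum>i<n. h (z i) (z (Suc i)) - hstar h)"
  shows "ereal \<eta> \<le> delta phi (\<lambda>_. a) (\<lambda>_. b)"
proof (rule ereal_ge_eps)
  fix e :: real assume e: "0 < e"
  have ab: "a \<in> {0..1}" "b \<in> {0..1}" using a b unfolding mset_h_def by auto
  have xa: "(\<lambda>_. a) \<in> Xsp" and xb: "(\<lambda>_. b) \<in> Xsp" using Xsp_const ab by auto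
  define d where "d = min \<bar>c - a\<bar> \<bar>c - b\<bar>"
  have dpos: "d > 0" using c unfolding d_def by auto
  define \<epsilon> where "\<epsilon> = min (d / 4) (e / (8 * L))"
  have epos: "\<epsilon> > 0" using dpos e L_pos unfolding \<epsilon>_def by auto
  have e1: "2 * \<epsilon> < d" using dpos unfolding \<epsilon>_def by auto
  have e2: "8 * L * \<epsilon> \<le> e"
  proof -
    have "\<epsilon> \<le> e / (8 * L)" unfolding \<epsilon>_def by simp
    then have "8 * L * \<epsilon> \<le> 8 * L * (e / (8 * L))" using L_pos by (intro mult_left_mono) auto
    then show ?thesis using L_pos by simp
  qed
  have key: "\<eta> - 8 * L * \<epsilon> \<le> birkhoff phi n z + birkhoff phi m w"
    if "n \<ge> 1" "m \<ge> 1" "z \<in> Bset (\<lambda>_. a) (\<lambda>_. b) n \<epsilon>" "w \<in> Bset (\<lambda>_. b) (\<lambda>_. a) m \<epsilon>" for n m z w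
  proof (rule pair_bound[OF ab eta that(3) that(4) that(1) that(2)])
    have z0: "\<bar>a - z 0\<bar> < 2 * \<epsilon>" using Bset_coord(2)[OF that(3) xa xb, of 0] by simp
    have w0: "\<bar>b - w 0\<bar> < 2 * \<epsilon>" using Bset_coord(2)[OF that(4) xb xa, of 0] by simp
    show "(z 0 \<le> c \<and> c \<le> w 0) \<or> (w 0 \<le> c \<and> c \<le> z 0)"
    proof (cases "a < c \<and> c < b")
      case True
      then have "d \<le> c - a" "d \<le> b - c" unfolding d_def by auto
      then show ?thesis using z0 w0 e1 unfolding abs_less_iff by auto
    next
      case False
      then have "b < c \<and> c < a" using c by auto
      then have "d \<le> a - c" "d \<le> c - b" unfolding d_def by auto
      then show ?thesis using z0 w0 e1 unfolding abs_less_iff by auto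
    qed
  qed
  have "ereal (\<eta> - 8 * L * \<epsilon>) \<le> Peps (\<lambda>_. a) (\<lambda>_. b) \<epsilon> + Peps (\<lambda>_. b) (\<lambda>_. a) \<epsilon>"
    unfolding Peps_def
  proof (rule liminf_pair[where C = "- L * (\<bar>a - b\<bar> + 4 * \<epsilon>)"])
    fix n z assume "z \<in> Bset (\<lambda>_. a) (\<lambda>_. b) n \<epsilon>"
    then show "- L * (\<bar>a - b\<bar> + 4 * \<epsilon>) \<le> birkhoff phi n z" using birk_lower[OF _ xa xb] by simp
  next
    fix n z assume "z \<in> Bset (\<lambda>_. b) (\<lambda>_. a) n \<epsilon>"
    then have "- L * (\<bar>b - a\<bar> + 4 * \<epsilon>) \<le> birkhoff phi n z" using birk_lower[OF _ xb xa] by simp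
    moreover have "\<bar>b - a\<bar> = \<bar>a - b\<bar>" by (rule abs_minus_commute)
    ultimately show "- L * (\<bar>a - b\<bar> + 4 * \<epsilon>) \<le> birkhoff phi n z" by simp
  qed (use key in auto)
  also have "\<dots> \<le> delta phi (\<lambda>_. a) (\<lambda>_. b)" unfolding delta_def peierls_SUP
    by (intro add_mono SUP_upper) (use epos in auto)
  finally have "ereal (\<eta> - 8 * L * \<epsilon>) \<le> delta phi (\<lambda>_. a) (\<lambda>_. b)" .
  moreover have "ereal (\<eta> - e) \<le> ereal (\<eta> - 8 * L * \<epsilon>)" using e2 by simp
  ultimately show "ereal (\<eta> - e) \<le> delta phi (\<lambda>_. a) (\<lambda>_. b)" by (rule order_trans[rotated])
qed

end


context twist_td
begin

lemma delta_sep: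
  assumes a: "a \<in> mset_h h" and e: "\<epsilon> > 0"
  shows "\<exists>\<eta>>0. \<forall>b\<in>mset_h h. \<epsilon> \<le> \<bar>a - b\<bar> \<longrightarrow> ereal \<eta> \<le> delta phi (\<lambda>_. a) (\<lambda>_. b)"
proof -
  have a01: "a \<in> {0..1}" using a mset01 by auto
  have up: "\<exists>\<eta>>0. \<forall>b\<in>mset_h h. a + \<epsilon> \<le> b \<longrightarrow> ereal \<eta> \<le> delta phi (\<lambda>_. a) (\<lambda>_. b)"
  proof (cases "a + \<epsilon> \<le> 1")
    case True
    obtain c where c: "a < c" "c < a + \<epsilon>" "c \<notin> mset_h h" using gap_up[OF a, of "a + \<epsilon>"] True e a01 by auto
    have c01: "c \<in> {0..1}" using c a01 True by auto
    obtain \<eta> where eta: "\<eta> > 0" "\<forall>(n::nat) (z::nat \<Rightarrow> real) j k. n \<ge> 1 \<longrightarrow> (\<forall>i\<le>n. z i \<in> {0..1}) \<longrightarrow> j < n \<longrightarrow> k < n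
     \<longrightarrow> z j \<le> c \<longrightarrow> c \<le> z k \<longrightarrow> \<eta> - L * \<bar>z n - z 0\<bar> \<le> (\<Sum>i<n. h (z i) (z (Suc i)) - hstar h)"
      using chain_bound_eta[OF c01 c(3)] by blast
    show ?thesis
    proof (intro exI[of _ \<eta>] conjI ballI impI)
      fix b assume "b \<in> mset_h h" "a + \<epsilon> \<le> b"
      then show "ereal \<eta> \<le> delta phi (\<lambda>_. a) (\<lambda>_. b)"
        using delta_lower[OF a _ _ eta(2)] c by auto
    qed (rule eta(1))
  next
    case False
    then show ?thesis using mset01 by (intro exI[of _ 1]) force
  qed
  have down: "\<exists>\<eta>>0. \<forall>b\<in>mset_h h. b \<le> a - \<epsilon> \<longrightarrow> ereal \<eta> \<le> delta phi (\<lambda>_. a) (\<lambda>_. b)"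
  proof (cases "0 \<le> a - \<epsilon>")
    case True
    obtain c where c: "a - \<epsilon> < c" "c < a" "c \<notin> mset_h h" using gap_down[OF a, of "a - \<epsilon>"] True e a01 by auto
    have c01: "c \<in> {0..1}" using c a01 True by auto
    obtain \<eta> where eta: "\<eta> > 0" "\<forall>(n::nat) (z::nat \<Rightarrow> real) j k. n \<ge> 1 \<longrightarrow> (\<forall>i\<le>n. z i \<in> {0..1}) \<longrightarrow> j < n \<longrightarrow> k < n
     \<longrightarrow> z j \<le> c \<longrightarrow> c \<le> z k \<longrightarrow> \<eta> - L * \<bar>z n - z 0\<bar> \<le> (\<Sum>i<n. h (z i) (z (Suc i)) - hstar h)"
      using chain_bound_eta[OF c01 c(3)] by blast
    show ?thesis
    proof (intro exI[of _ \<eta>] conjI ballI impI)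
      fix b assume "b \<in> mset_h h" "b \<le> a - \<epsilon>"
      then show "ereal \<eta> \<le> delta phi (\<lambda>_. a) (\<lambda>_. b)"
        using delta_lower[OF a _ _ eta(2)] c by auto
    qed (rule eta(1))
  next
    case False
    then show ?thesis using mset01 by (intro exI[of _ 1]) force
  qed
  obtain \<eta>1 where h1: "\<eta>1 > 0" "\<forall>b\<in>mset_h h. a + \<epsilon> \<le> b \<longrightarrow> ereal \<eta>1 \<le> delta phi (\<lambda>_. a) (\<lambda>_. b)"
    using up by blast
  obtain \<eta>2 where h2: "\<eta>2 > 0" "\<forall>b\<in>mset_h h. b \<le> a - \<epsilon> \<longrightarrow> ereal \<eta>2 \<le> delta phi (\<lambda>_. a) (\<lambda>_. b)"
    using down by blast
  show ?thesis
  proof (intro exI[of _ "min \<eta>1 \<eta>2"] conjI ballI impI)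
    fix b assume b: "b \<in> mset_h h" "\<epsilon> \<le> \<bar>a - b\<bar>"
    then have "a + \<epsilon> \<le> b \<or> b \<le> a - \<epsilon>" by auto
    then show "ereal (min \<eta>1 \<eta>2) \<le> delta phi (\<lambda>_. a) (\<lambda>_. b)"
    proof
      assume "a + \<epsilon> \<le> b"
      then have "ereal \<eta>1 \<le> delta phi (\<lambda>_. a) (\<lambda>_. b)" using h1 b by auto
      then show ?thesis by (rule order_trans[rotated]) simp
    next
      assume "b \<le> a - \<epsilon>"
      then have "ereal \<eta>2 \<le> delta phi (\<lambda>_. a) (\<lambda>_. b)" using h2 b by auto
      then show ?thesis by (rule order_trans[rotated]) simp
    qed
  qed (use h1 h2 in auto)
qed

lemma qclass_const:
  assumes a: "a \<in> mset_h h"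
  shows "qclass phi (\<lambda>_. a) = {\<lambda>_. a}"
proof
  show "{\<lambda>_. a} \<subseteq> qclass phi (\<lambda>_. a)"
    unfolding qclass_def using const_in_aubry[OF a] delta_self[OF a] by auto
  show "qclass phi (\<lambda>_. a) \<subseteq> {\<lambda>_. a}"
  proof
    fix y assume y: "y \<in> qclass phi (\<lambda>_. a)"
    then obtain b where b: "b \<in> mset_h h" "y = (\<lambda>_. b)" unfolding qclass_def aubry_char by auto
    have d0: "delta phi (\<lambda>_. a) (\<lambda>_. b) = 0" using y b unfolding qclass_def by auto
    have "a = b"
    proof (rule ccontr)
      assume "a \<noteq> b"
      then have pos: "0 < \<bar>a - b\<bar>" by simp
      obtain \<eta> where "\<eta> > 0" "\<forall>b'\<in>mset_h h. \<bar>a - b\<bar> \<le> \<bar>a - b'\<bar> \<longrightarrow> ereal \<eta> \<le> delta phi (\<lambda>_. a) (\<lambda>_. b')"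
        using delta_sep[OF a pos] by blast
      then show False using b d0 by (auto simp: zero_ereal_def)
    qed
    then show "y \<in> {\<lambda>_. a}" using b by simp
  qed
qed

lemma quot_char: "quot_aubry phi = (\<lambda>x. {x}) ` aubry phi"
  unfolding quot_aubry_def aubry_char using qclass_const by (auto simp: image_image)

lemma qdelta_single: "qdelta phi {x} {y} = delta phi x y"
  unfolding qdelta_def by simp

lemma main: "homeomorphic_aubry phi"
  unfolding homeomorphic_aubry_def
proof (intro exI[of _ "\<lambda>x. {x}"] exI[of _ "\<lambda>A. SOME a. a \<in> A"] conjI)
  show "\<forall>x\<in>aubry phi. {x} \<in> quot_aubry phi \<and> (SOME a. a \<in> {x}) = x"
    unfolding quot_char by auto
  show "\<forall>A\<in>quot_aubry phi. (SOME a. a \<in> A) \<in> aubry phi \<and> {SOME a. a \<in> A} = A"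
    unfolding quot_char by auto
  show "\<forall>x\<in>aubry phi. \<forall>\<epsilon>>0. \<exists>\<eta>>0. \<forall>y\<in>aubry phi. dX x y < \<eta> \<longrightarrow> qdelta phi {x} {y} < ereal \<epsilon>"
  proof (intro ballI allI impI)
    fix x \<epsilon> assume x: "x \<in> aubry phi" and e: "(\<epsilon>::real) > 0"
    obtain a where a: "a \<in> mset_h h" "x = (\<lambda>_. a)" using x unfolding aubry_char by auto
    show "\<exists>\<eta>>0. \<forall>y\<in>aubry phi. dX x y < \<eta> \<longrightarrow> qdelta phi {x} {y} < ereal \<epsilon>"
    proof (intro exI[of _ "\<epsilon> / (2 * L)"] conjI ballI impI)
      show "0 < \<epsilon> / (2 * L)" using e L_pos by simp
      fix y assume y: "y \<in> aubry phi" "dX x y < \<epsilon> / (2 * L)"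
      obtain b where b: "b \<in> mset_h h" "y = (\<lambda>_. b)" using y unfolding aubry_char by auto
      have "\<bar>a - b\<bar> < \<epsilon> / (2 * L)" using y(2) a b dX_const by simp
      then have "2 * L * \<bar>a - b\<bar> < \<epsilon>" using L_pos by (simp add: field_simps)
      then show "qdelta phi {x} {y} < ereal \<epsilon>"
        using delta_upper[OF a(1) b(1)] a b qdelta_single by (metis ereal_less_eq(3) le_less_trans less_ereal.simps(1))
    qed
  qed
  show "\<forall>A\<in>quot_aubry phi. \<forall>\<epsilon>>0. \<exists>\<eta>>0. \<forall>B\<in>quot_aubry phi.
         qdelta phi A B < ereal \<eta> \<longrightarrow> dX (SOME a. a \<in> A) (SOME a. a \<in> B) < \<epsilon>"
  proof (intro ballI allI impI)
    fix A \<epsilon> assume A: "A \<in> quot_aubry phi" and e: "(\<epsilon>::real) > 0"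
    obtain a where a: "a \<in> mset_h h" "A = {\<lambda>_. a}" using A unfolding quot_char aubry_char by auto
    obtain \<eta> where eta: "\<eta> > 0" "\<forall>b\<in>mset_h h. \<epsilon> \<le> \<bar>a - b\<bar> \<longrightarrow> ereal \<eta> \<le> delta phi (\<lambda>_. a) (\<lambda>_. b)"
      using delta_sep[OF a(1) e] by blast
    show "\<exists>\<eta>>0. \<forall>B\<in>quot_aubry phi. qdelta phi A B < ereal \<eta> \<longrightarrow> dX (SOME a. a \<in> A) (SOME a. a \<in> B) < \<epsilon>"
    proof (intro exI[of _ \<eta>] conjI ballI impI)
      fix B assume B: "B \<in> quot_aubry phi" "qdelta phi A B < ereal \<eta>"
      obtain b where b: "b \<in> mset_h h" "B = {\<lambda>_. b}" using B unfolding quot_char aubry_char by auto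
      have "delta phi (\<lambda>_. a) (\<lambda>_. b) < ereal \<eta>" using B(2) a b qdelta_single by simp
      then have "\<bar>a - b\<bar> < \<epsilon>" using eta b by (meson not_le)
      then show "dX (SOME a. a \<in> A) (SOME a. a \<in> B) < \<epsilon>" using a b dX_const by simp
    qed (rule eta(1))
  qed
qed

end

theorem proposition4p9:
  fixes h :: "real \<Rightarrow> real \<Rightarrow> real"
  assumes "h \<in> classH"
    and "totally_disconnected (mset_h h)"
  shows "homeomorphic_aubry (\<lambda>x. h (x 0) (x 1))"
proof -
  interpret twist_td h by unfold_locales (use assms in auto)
  show ?thesis unfolding phi_lam by (rule main)
qed

end
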